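(* Let $G$ be a pro-group and $\varphi\colon G\to G$ an automorphism in $\operatorname{Pro}(\mathbf{Grp})$ with $\varphi^n=\mathrm{id}_G$ for some integer $n\ge1$. Then there exist a directed set $J$, an inverse system of groups $(G'_j)_{j\in J}$ and automorphisms $\varphi_j$ of $G'_j$ with $\varphi_j^n=\mathrm{id}$ commuting with the transition maps, and an isomorphism $G\cong G'$ in $\operatorname{Pro}(\mathbf{Grp})$ carrying $\varphi$ to the level automorphism $(\varphi_j)_j$.
   Context: For a category $\mathcal C$, $\operatorname{Pro}(\mathcal C)$ is its pro-completion: objects are inverse systems, i.e. functors $X\colon \mathcal I_X^{op}\to\mathcal C$ with $\mathcal I_X$ a small filtered category, and $\operatorname{Hom}_{\operatorname{Pro}(\mathcal C)}(X,Y)=\varprojlim_{j\in\mathcal I_Y}\varinjlim_{i\in\mathcal I_X}\mathcal C(X_i,Y_j)$. A pro-group is an object of $\operatorname{Pro}(\mathbf{Grp})$. *)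

theory Defs
  imports "HOL-Algebra.Group"
begin

record ('i,'m) cat =
  Obj :: "'i set"
  Arr :: "'m set"
  Dom :: "'m \<Rightarrow> 'i"
  Cod :: "'m \<Rightarrow> 'i"
  Comp :: "'m \<Rightarrow> 'm \<Rightarrow> 'm"   (* Comp C g f = g o f *)
  Ident :: "'i \<Rightarrow> 'm"

definition cat_hom :: "('i,'m) cat \<Rightarrow> 'i \<Rightarrow> 'i \<Rightarrow> 'm set" where
  "cat_hom C i j = {f \<in> Arr C. Dom C f = i \<and> Cod C f = j}"

definition category :: "('i,'m) cat \<Rightarrow> bool" where
  "category C \<longleftrightarrow>
     (\<forall>f\<in>Arr C. Dom C f \<in> Obj C \<and> Cod C f \<in> Obj C) \<and>
     (\<forall>i\<in>Obj C. Ident C i \<in> cat_hom C i i) \<and>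
     (\<forall>f\<in>Arr C. \<forall>g\<in>Arr C. Cod C f = Dom C g \<longrightarrow>
         Comp C g f \<in> cat_hom C (Dom C f) (Cod C g)) \<and>
     (\<forall>f\<in>Arr C. Comp C (Ident C (Cod C f)) f = f \<and> Comp C f (Ident C (Dom C f)) = f) \<and>
     (\<forall>f\<in>Arr C. \<forall>g\<in>Arr C. \<forall>h\<in>Arr C. Cod C f = Dom C g \<and> Cod C g = Dom C h \<longrightarrow>
         Comp C h (Comp C g f) = Comp C (Comp C h g) f)"

definition filtered :: "('i,'m) cat \<Rightarrow> bool" where
  "filtered C \<longleftrightarrow> category C \<and> Obj C \<noteq> {} \<and>
     (\<forall>i\<in>Obj C. \<forall>j\<in>Obj C. \<exists>k\<in>Obj C. cat_hom C i k \<noteq> {} \<and> cat_hom C j k \<noteq> {}) \<and>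
     (\<forall>i j u v. u \<in> cat_hom C i j \<and> v \<in> cat_hom C i j \<longrightarrow>
         (\<exists>k w. w \<in> cat_hom C j k \<and> Comp C w u = Comp C w v))"

definition directed_set :: "'j set \<Rightarrow> ('j \<Rightarrow> 'j \<Rightarrow> bool) \<Rightarrow> bool" where
  "directed_set J leq \<longleftrightarrow> J \<noteq> {} \<and>
     (\<forall>a\<in>J. leq a a) \<and>
     (\<forall>a\<in>J. \<forall>b\<in>J. \<forall>c\<in>J. leq a b \<and> leq b c \<longrightarrow> leq a c) \<and>
     (\<forall>a\<in>J. \<forall>b\<in>J. \<exists>c\<in>J. leq a c \<and> leq b c)"

definition dircat :: "'j set \<Rightarrow> ('j \<Rightarrow> 'j \<Rightarrow> bool) \<Rightarrow> ('j, 'j \<times> 'j) cat" where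
  "dircat J leq = \<lparr> Obj = J, Arr = {(a,b). a \<in> J \<and> b \<in> J \<and> leq a b},
      Dom = fst, Cod = snd, Comp = (\<lambda>g f. (fst f, snd g)), Ident = (\<lambda>j. (j,j)) \<rparr>"

text \<open>An inverse system is a functor X : I^op \<rightarrow> Grp, I small filtered.
  pmap X u, for u : i \<rightarrow> j in I, is the group homomorphism X_j \<rightarrow> X_i.\<close>

record ('i,'m,'a) pro_obj =
  pidx :: "('i,'m) cat"
  pgrp :: "'i \<Rightarrow> 'a monoid"
  pmap :: "'m \<Rightarrow> 'a \<Rightarrow> 'a"

definition pro_group :: "('i,'m,'a) pro_obj \<Rightarrow> bool" where
  "pro_group X \<longleftrightarrow> filtered (pidx X) \<and>
     (\<forall>i\<in>Obj (pidx X). group (pgrp X i)) \<and>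
     (\<forall>u\<in>Arr (pidx X). pmap X u \<in> hom (pgrp X (Cod (pidx X) u)) (pgrp X (Dom (pidx X) u))) \<and>
     (\<forall>i\<in>Obj (pidx X). \<forall>x\<in>carrier (pgrp X i). pmap X (Ident (pidx X) i) x = x) \<and>
     (\<forall>u\<in>Arr (pidx X). \<forall>v\<in>Arr (pidx X). Cod (pidx X) u = Dom (pidx X) v \<longrightarrow>
        (\<forall>x\<in>carrier (pgrp X (Cod (pidx X) v)).
            pmap X (Comp (pidx X) v u) x = pmap X u (pmap X v x)))"

text \<open>A representative of a morphism X \<rightarrow> Y assigns to each index j of Y a germ
  (i, f) with f : X_i \<rightarrow> Y_j. Two germs represent the same element of
  colim_i Hom(X_i, Y_j) iff they agree after precomposition with suitable transition maps.\<close>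

definition germ_eq :: "('i,'m,'a,'z) pro_obj_scheme \<Rightarrow> 'i \<times> ('a \<Rightarrow> 'b) \<Rightarrow> 'i \<times> ('a \<Rightarrow> 'b) \<Rightarrow> bool" where
  "germ_eq X g h \<longleftrightarrow> (\<exists>k u u'. u \<in> cat_hom (pidx X) (fst g) k \<and> u' \<in> cat_hom (pidx X) (fst h) k \<and>
      (\<forall>x\<in>carrier (pgrp X k). snd g (pmap X u x) = snd h (pmap X u' x)))"

definition pro_mor :: "('i,'m,'a) pro_obj \<Rightarrow> ('j,'n,'b) pro_obj \<Rightarrow> ('j \<Rightarrow> 'i \<times> ('a \<Rightarrow> 'b)) \<Rightarrow> bool" where
  "pro_mor X Y \<rho> \<longleftrightarrow>
     (\<forall>j\<in>Obj (pidx Y). fst (\<rho> j) \<in> Obj (pidx X) \<and> snd (\<rho> j) \<in> hom (pgrp X (fst (\<rho> j))) (pgrp Y j)) \<and>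
     (\<forall>v\<in>Arr (pidx Y). germ_eq X (fst (\<rho> (Cod (pidx Y) v)), pmap Y v \<circ> snd (\<rho> (Cod (pidx Y) v)))
                                  (\<rho> (Dom (pidx Y) v)))"

definition pro_eq :: "('i,'m,'a) pro_obj \<Rightarrow> ('j,'n,'b) pro_obj \<Rightarrow> ('j \<Rightarrow> 'i \<times> ('a \<Rightarrow> 'b)) \<Rightarrow> ('j \<Rightarrow> 'i \<times> ('a \<Rightarrow> 'b)) \<Rightarrow> bool" where
  "pro_eq X Y \<rho> \<sigma> \<longleftrightarrow> (\<forall>j\<in>Obj (pidx Y). germ_eq X (\<rho> j) (\<sigma> j))"

text \<open>Composition: pro_comp \<sigma> \<rho> = \<sigma> o \<rho> for \<rho> : X \<rightarrow> Y, \<sigma> : Y \<rightarrow> Z.\<close>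
definition pro_comp :: "('k \<Rightarrow> 'j \<times> ('b \<Rightarrow> 'c)) \<Rightarrow> ('j \<Rightarrow> 'i \<times> ('a \<Rightarrow> 'b)) \<Rightarrow> ('k \<Rightarrow> 'i \<times> ('a \<Rightarrow> 'c))" where
  "pro_comp \<sigma> \<rho> = (\<lambda>k. (fst (\<rho> (fst (\<sigma> k))), snd (\<sigma> k) \<circ> snd (\<rho> (fst (\<sigma> k)))))"

definition pro_id :: "'i \<Rightarrow> 'i \<times> ('a \<Rightarrow> 'a)" where
  "pro_id = (\<lambda>i. (i, id))"

definition pro_pow :: "('i \<Rightarrow> 'i \<times> ('a \<Rightarrow> 'a)) \<Rightarrow> nat \<Rightarrow> ('i \<Rightarrow> 'i \<times> ('a \<Rightarrow> 'a))" where
  "pro_pow \<phi> n = (pro_comp \<phi> ^^ n) pro_id"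

definition pro_iso :: "('i,'m,'a) pro_obj \<Rightarrow> ('j,'n,'b) pro_obj \<Rightarrow> ('j \<Rightarrow> 'i \<times> ('a \<Rightarrow> 'b)) \<Rightarrow> bool" where
  "pro_iso X Y \<theta> \<longleftrightarrow> pro_mor X Y \<theta> \<and>
     (\<exists>\<psi>. pro_mor Y X \<psi> \<and> pro_eq X X (pro_comp \<psi> \<theta>) pro_id \<and> pro_eq Y Y (pro_comp \<theta> \<psi>) pro_id)"

end

theory Submission
  imports Defs
begin


lemma cat_hom_iff: "u \<in> cat_hom C i j \<longleftrightarrow> u \<in> Arr C \<and> Dom C u = i \<and> Cod C u = j"
  by (simp add: cat_hom_def)

lemma hom_objs:
  assumes "category C" "u \<in> cat_hom C i j"
  shows "i \<in> Obj C" "j \<in> Obj C" "u \<in> Arr C"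
  using assms unfolding category_def cat_hom_def by auto

lemma comp_hom:
  assumes "category C" "u \<in> cat_hom C i j" "v \<in> cat_hom C j k"
  shows "Comp C v u \<in> cat_hom C i k"
  using assms unfolding category_def cat_hom_def by auto

lemma id_hom:
  assumes "category C" "i \<in> Obj C" shows "Ident C i \<in> cat_hom C i i"
  using assms unfolding category_def by auto

lemma comp_assoc:
  assumes "category C" "u \<in> cat_hom C i j" "v \<in> cat_hom C j k" "w \<in> cat_hom C k l"
  shows "Comp C w (Comp C v u) = Comp C (Comp C w v) u"
  using assms unfolding category_def cat_hom_def by auto

lemma pg_cat: "pro_group X \<Longrightarrow> category (pidx X)"
  by (simp add: pro_group_def filtered_def)

lemma pg_group: "pro_group X \<Longrightarrow> i \<in> Obj (pidx X) \<Longrightarrow> group (pgrp X i)"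
  by (simp add: pro_group_def)

lemma pmap_hom:
  assumes "pro_group X" "u \<in> cat_hom (pidx X) i j"
  shows "pmap X u \<in> hom (pgrp X j) (pgrp X i)"
  using assms unfolding pro_group_def cat_hom_def by auto

lemma pmap_carrier:
  assumes "pro_group X" "u \<in> cat_hom (pidx X) i j" "x \<in> carrier (pgrp X j)"
  shows "pmap X u x \<in> carrier (pgrp X i)"
  using pmap_hom[OF assms(1,2)] assms(3) by (rule hom_in_carrier)

lemma pmap_comp:
  assumes "pro_group X" "u \<in> cat_hom (pidx X) i j" "v \<in> cat_hom (pidx X) j k"
    "x \<in> carrier (pgrp X k)"
  shows "pmap X (Comp (pidx X) v u) x = pmap X u (pmap X v x)"
  using assms unfolding pro_group_def cat_hom_def by auto

lemma pmap_id:
  assumes "pro_group X" "i \<in> Obj (pidx X)" "x \<in> carrier (pgrp X i)"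
  shows "pmap X (Ident (pidx X) i) x = x"
  using assms unfolding pro_group_def by auto

lemma pg_ub:
  assumes "pro_group X" "i \<in> Obj (pidx X)" "j \<in> Obj (pidx X)"
  shows "\<exists>k u v. u \<in> cat_hom (pidx X) i k \<and> v \<in> cat_hom (pidx X) j k"
  using assms unfolding pro_group_def filtered_def by blast

lemma pg_coeq:
  assumes "pro_group X" "u \<in> cat_hom (pidx X) i j" "v \<in> cat_hom (pidx X) i j"
  shows "\<exists>k w. w \<in> cat_hom (pidx X) j k \<and> Comp (pidx X) w u = Comp (pidx X) w v"
  using assms unfolding pro_group_def filtered_def by blast

lemma pg_nonempty: "pro_group X \<Longrightarrow> Obj (pidx X) \<noteq> {}"
  by (simp add: pro_group_def filtered_def)

lemma finite_ub:
  assumes "pro_group X" "finite S" "S \<subseteq> Obj (pidx X)"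
  shows "\<exists>c\<in>Obj (pidx X). \<forall>s\<in>S. cat_hom (pidx X) s c \<noteq> {}"
  using assms(2,3)
proof (induction S rule: finite_induct)
  case empty then show ?case using pg_nonempty[OF assms(1)] by auto
next
  case (insert s S)
  then obtain c where c: "c \<in> Obj (pidx X)" "\<forall>t\<in>S. cat_hom (pidx X) t c \<noteq> {}" by auto
  have s: "s \<in> Obj (pidx X)" using insert.prems by auto
  obtain k u v where uv: "u \<in> cat_hom (pidx X) s k" "v \<in> cat_hom (pidx X) c k"
    using pg_ub[OF assms(1) s c(1)] by blast
  have k: "k \<in> Obj (pidx X)" using hom_objs[OF pg_cat[OF assms(1)] uv(1)] by auto
  have "\<forall>t\<in>insert s S. cat_hom (pidx X) t k \<noteq> {}"
  proof
    fix t assume "t \<in> insert s S"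
    then show "cat_hom (pidx X) t k \<noteq> {}"
    proof
      assume "t = s" then show ?thesis using uv by auto
    next
      assume "t \<in> S"
      then obtain w where "w \<in> cat_hom (pidx X) t c" using c by auto
      then have "Comp (pidx X) v w \<in> cat_hom (pidx X) t k"
        using comp_hom[OF pg_cat[OF assms(1)]] uv by blast
      then show ?thesis by auto
    qed
  qed
  then show ?case using k by blast
qed

section \<open>Germs\<close>

lemma germ_eqI:
  assumes "u \<in> cat_hom (pidx X) a k" "u' \<in> cat_hom (pidx X) b k"
    "\<And>x. x \<in> carrier (pgrp X k) \<Longrightarrow> f (pmap X u x) = g (pmap X u' x)"
  shows "germ_eq X (a,f) (b,g)"
  using assms unfolding germ_eq_def by auto

lemma germ_eqE:
  assumes "germ_eq X (a,f) (b,g)"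
  obtains k u u' where "u \<in> cat_hom (pidx X) a k" "u' \<in> cat_hom (pidx X) b k"
    "\<And>x. x \<in> carrier (pgrp X k) \<Longrightarrow> f (pmap X u x) = g (pmap X u' x)"
proof -
  from assms obtain k u u' where "u \<in> cat_hom (pidx X) a k" "u' \<in> cat_hom (pidx X) b k"
    "\<forall>x\<in>carrier (pgrp X k). f (pmap X u x) = g (pmap X u' x)"
    unfolding germ_eq_def by auto
  then show thesis using that by blast
qed

lemma germ_refl:
  assumes "pro_group X" "a \<in> Obj (pidx X)" shows "germ_eq X (a,f) (a,f)"
  using id_hom[OF pg_cat[OF assms(1)] assms(2)] by (intro germ_eqI) auto

lemma germ_sym: "germ_eq X (a,f) (b,g) \<Longrightarrow> germ_eq X (b,g) (a,f)"
  unfolding germ_eq_def by fastforce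

lemma germ_real:
  assumes "pro_group X" "u \<in> cat_hom (pidx X) a k"
  shows "germ_eq X (k, \<lambda>x. f (pmap X u x)) (a, f)"
proof -
  have k: "k \<in> Obj (pidx X)" using hom_objs[OF pg_cat[OF assms(1)] assms(2)] by auto
  show ?thesis
    by (rule germ_eqI[OF id_hom[OF pg_cat[OF assms(1)] k] assms(2)]) (simp add: pmap_id[OF assms(1) k])
qed

lemma germ_cong:
  assumes "pro_group X" "a \<in> Obj (pidx X)" "\<And>x. x \<in> carrier (pgrp X a) \<Longrightarrow> f x = g x"
  shows "germ_eq X (a,f) (a,g)"
proof -
  have i: "Ident (pidx X) a \<in> cat_hom (pidx X) a a" by (rule id_hom[OF pg_cat[OF assms(1)] assms(2)])
  show ?thesis
    by (rule germ_eqI[OF i i]) (simp add: pmap_id[OF assms(1,2)] assms(3))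
qed

lemma germ_post: "germ_eq X (a,f) (b,g) \<Longrightarrow> germ_eq X (a, \<lambda>x. h (f x)) (b, \<lambda>x. h (g x))"
  unfolding germ_eq_def by fastforce

lemma germ_trans:
  assumes X: "pro_group X" and 1: "germ_eq X (a,f) (b,g)" and 2: "germ_eq X (b,g) (c,h)"
  shows "germ_eq X (a,f) (c,h)"
proof -
  note C = pg_cat[OF X]
  obtain k1 u1 u1' where k1: "u1 \<in> cat_hom (pidx X) a k1" "u1' \<in> cat_hom (pidx X) b k1"
    "\<And>x. x \<in> carrier (pgrp X k1) \<Longrightarrow> f (pmap X u1 x) = g (pmap X u1' x)"
    using 1 by (elim germ_eqE) blast
  obtain k2 u2 u2' where k2: "u2 \<in> cat_hom (pidx X) b k2" "u2' \<in> cat_hom (pidx X) c k2"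
    "\<And>x. x \<in> carrier (pgrp X k2) \<Longrightarrow> g (pmap X u2 x) = h (pmap X u2' x)"
    using 2 by (elim germ_eqE) blast
  obtain k3 p q where pq: "p \<in> cat_hom (pidx X) k1 k3" "q \<in> cat_hom (pidx X) k2 k3"
    using pg_ub[OF X, of k1 k2] hom_objs[OF C k1(1)] hom_objs[OF C k2(1)] by blast
  have e1: "Comp (pidx X) p u1' \<in> cat_hom (pidx X) b k3" using comp_hom[OF C k1(2) pq(1)] .
  have e2: "Comp (pidx X) q u2 \<in> cat_hom (pidx X) b k3" using comp_hom[OF C k2(1) pq(2)] .
  obtain k4 e where e: "e \<in> cat_hom (pidx X) k3 k4"
     "Comp (pidx X) e (Comp (pidx X) p u1') = Comp (pidx X) e (Comp (pidx X) q u2)"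
    using pg_coeq[OF X e1 e2] by blast
  have ep: "Comp (pidx X) e p \<in> cat_hom (pidx X) k1 k4" using comp_hom[OF C pq(1) e(1)] .
  have eq: "Comp (pidx X) e q \<in> cat_hom (pidx X) k2 k4" using comp_hom[OF C pq(2) e(1)] .
  show ?thesis
  proof (rule germ_eqI[OF comp_hom[OF C k1(1) ep] comp_hom[OF C k2(2) eq]])
    fix x assume x: "x \<in> carrier (pgrp X k4)"
    have xp: "pmap X (Comp (pidx X) e p) x \<in> carrier (pgrp X k1)" using pmap_carrier[OF X ep x] .
    have xq: "pmap X (Comp (pidx X) e q) x \<in> carrier (pgrp X k2)" using pmap_carrier[OF X eq x] .
    have "f (pmap X (Comp (pidx X) (Comp (pidx X) e p) u1) x)
          = f (pmap X u1 (pmap X (Comp (pidx X) e p) x))"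
      using pmap_comp[OF X k1(1) ep x] by simp
    also have "\<dots> = g (pmap X u1' (pmap X (Comp (pidx X) e p) x))" using k1(3)[OF xp] .
    also have "\<dots> = g (pmap X (Comp (pidx X) (Comp (pidx X) e p) u1') x)"
      using pmap_comp[OF X k1(2) ep x] by simp
    also have "Comp (pidx X) (Comp (pidx X) e p) u1' = Comp (pidx X) (Comp (pidx X) e q) u2"
      using e(2) comp_assoc[OF C k1(2) pq(1) e(1)] comp_assoc[OF C k2(1) pq(2) e(1)] by simp
    also have "g (pmap X (Comp (pidx X) (Comp (pidx X) e q) u2) x)
          = g (pmap X u2 (pmap X (Comp (pidx X) e q) x))"
      using pmap_comp[OF X k2(1) eq x] by simp
    also have "\<dots> = h (pmap X u2' (pmap X (Comp (pidx X) e q) x))" using k2(3)[OF xq] .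
    also have "\<dots> = h (pmap X (Comp (pidx X) (Comp (pidx X) e q) u2') x)"
      using pmap_comp[OF X k2(2) eq x] by simp
    finally show "f (pmap X (Comp (pidx X) (Comp (pidx X) e p) u1) x) =
       h (pmap X (Comp (pidx X) (Comp (pidx X) e q) u2') x)" .
  qed
qed

lemma germ_level:
  assumes X: "pro_group X" and g: "germ_eq X (k,F) (k,G)"
  shows "\<exists>k' w. w \<in> cat_hom (pidx X) k k' \<and>
           (\<forall>x\<in>carrier (pgrp X k'). F (pmap X w x) = G (pmap X w x))"
proof -
  note C = pg_cat[OF X]
  obtain k0 p q where pq: "p \<in> cat_hom (pidx X) k k0" "q \<in> cat_hom (pidx X) k k0"
    "\<And>x. x \<in> carrier (pgrp X k0) \<Longrightarrow> F (pmap X p x) = G (pmap X q x)"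
    using g by (elim germ_eqE) blast
  obtain k1 e where e: "e \<in> cat_hom (pidx X) k0 k1" "Comp (pidx X) e p = Comp (pidx X) e q"
    using pg_coeq[OF X pq(1,2)] by blast
  have w: "Comp (pidx X) e p \<in> cat_hom (pidx X) k k1" using comp_hom[OF C pq(1) e(1)] .
  show ?thesis
  proof (intro exI conjI ballI)
    show "Comp (pidx X) e p \<in> cat_hom (pidx X) k k1" by (rule w)
    fix x assume x: "x \<in> carrier (pgrp X k1)"
    have "F (pmap X (Comp (pidx X) e p) x) = F (pmap X p (pmap X e x))"
      using pmap_comp[OF X pq(1) e(1) x] by simp
    also have "\<dots> = G (pmap X q (pmap X e x))" using pq(3)[OF pmap_carrier[OF X e(1) x]] .
    also have "\<dots> = G (pmap X (Comp (pidx X) e q) x)"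
      using pmap_comp[OF X pq(2) e(1) x] by simp
    finally show "F (pmap X (Comp (pidx X) e p) x) = G (pmap X (Comp (pidx X) e p) x)"
      using e(2) by simp
  qed
qed

lemma germ_multi:
  assumes X: "pro_group X" and S: "finite S" and k: "k \<in> Obj (pidx X)"
    and g: "\<And>s. s \<in> S \<Longrightarrow> germ_eq X (k, F s) (k, G s)"
  shows "\<exists>k' w. w \<in> cat_hom (pidx X) k k' \<and>
           (\<forall>s\<in>S. \<forall>x\<in>carrier (pgrp X k'). F s (pmap X w x) = G s (pmap X w x))"
  using S g
proof (induction S rule: finite_induct)
  case empty then show ?case using id_hom[OF pg_cat[OF X] k] by blast
next
  case (insert s S)
  note C = pg_cat[OF X]
  from insert obtain k1 w where w: "w \<in> cat_hom (pidx X) k k1"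
    "\<forall>t\<in>S. \<forall>x\<in>carrier (pgrp X k1). F t (pmap X w x) = G t (pmap X w x)" by auto
  have k1: "k1 \<in> Obj (pidx X)" using hom_objs[OF C w(1)] by auto
  have "germ_eq X (k1, \<lambda>x. F s (pmap X w x)) (k1, \<lambda>x. G s (pmap X w x))"
    by (rule germ_trans[OF X germ_real[OF X w(1)] germ_trans[OF X insert.prems[of s] germ_sym[OF germ_real[OF X w(1)]]]]) simp
  then obtain k2 w' where w': "w' \<in> cat_hom (pidx X) k1 k2"
    "\<forall>x\<in>carrier (pgrp X k2). F s (pmap X w (pmap X w' x)) = G s (pmap X w (pmap X w' x))"
    using germ_level[OF X] by blast
  have ww: "Comp (pidx X) w' w \<in> cat_hom (pidx X) k k2" using comp_hom[OF C w(1) w'(1)] .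
  show ?case
  proof (intro exI conjI ballI)
    show "Comp (pidx X) w' w \<in> cat_hom (pidx X) k k2" by (rule ww)
    fix t x assume t: "t \<in> insert s S" and x: "x \<in> carrier (pgrp X k2)"
    have e: "pmap X (Comp (pidx X) w' w) x = pmap X w (pmap X w' x)"
      using pmap_comp[OF X w(1) w'(1) x] .
    show "F t (pmap X (Comp (pidx X) w' w) x) = G t (pmap X (Comp (pidx X) w' w) x)"
      using t w(2) w'(2) x pmap_carrier[OF X w'(1) x] unfolding e by auto
  qed
qed




lemma germ_two:
  assumes X: "pro_group X" and g: "germ_eq X (a,f) (b,g)"
    and p: "p \<in> cat_hom (pidx X) a d" and q: "q \<in> cat_hom (pidx X) b d"
  shows "germ_eq X (d, \<lambda>x. f (pmap X p x)) (d, \<lambda>x. g (pmap X q x))"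
  by (rule germ_trans[OF X germ_real[OF X p] germ_trans[OF X g germ_sym[OF germ_real[OF X q]]]])

lemma pro_morD1:
  assumes "pro_mor X Y \<rho>" "j \<in> Obj (pidx Y)"
  shows "fst (\<rho> j) \<in> Obj (pidx X)" "snd (\<rho> j) \<in> hom (pgrp X (fst (\<rho> j))) (pgrp Y j)"
  using assms unfolding pro_mor_def by auto

lemma pro_morD2:
  assumes "pro_mor X Y \<rho>" "v \<in> cat_hom (pidx Y) d e"
  shows "germ_eq X (fst (\<rho> e), \<lambda>x. pmap Y v (snd (\<rho> e) x)) (fst (\<rho> d), snd (\<rho> d))"
  using assms unfolding pro_mor_def cat_hom_def by (auto simp: comp_def)

lemma pro_morI:
  assumes "category (pidx Y)"
    "\<And>j. j \<in> Obj (pidx Y) \<Longrightarrow> fst (\<rho> j) \<in> Obj (pidx X) \<and> snd (\<rho> j) \<in> hom (pgrp X (fst (\<rho> j))) (pgrp Y j)"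
    "\<And>v d e. v \<in> cat_hom (pidx Y) d e \<Longrightarrow>
        germ_eq X (fst (\<rho> e), \<lambda>x. pmap Y v (snd (\<rho> e) x)) (fst (\<rho> d), snd (\<rho> d))"
  shows "pro_mor X Y \<rho>"
  unfolding pro_mor_def
proof (intro conjI ballI)
  fix j assume "j \<in> Obj (pidx Y)" then show "fst (\<rho> j) \<in> Obj (pidx X)"
     "snd (\<rho> j) \<in> hom (pgrp X (fst (\<rho> j))) (pgrp Y j)" using assms(2) by auto
next
  fix v assume "v \<in> Arr (pidx Y)"
  then have "v \<in> cat_hom (pidx Y) (Dom (pidx Y) v) (Cod (pidx Y) v)" by (simp add: cat_hom_def)
  from assms(3)[OF this] show "germ_eq X (fst (\<rho> (Cod (pidx Y) v)), pmap Y v \<circ> snd (\<rho> (Cod (pidx Y) v))) (\<rho> (Dom (pidx Y) v))"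
    by (simp add: comp_def)
qed

lemma pro_mor_id:
  assumes X: "pro_group X" shows "pro_mor X X pro_id"
proof (rule pro_morI[OF pg_cat[OF X]])
  fix j assume "j \<in> Obj (pidx X)"
  then show "fst (pro_id j) \<in> Obj (pidx X) \<and> snd (pro_id j) \<in> hom (pgrp X (fst (pro_id j))) (pgrp X j)"
    by (simp add: pro_id_def hom_def)
next
  fix v d e assume v: "v \<in> cat_hom (pidx X) d e"
  have e: "e \<in> Obj (pidx X)" using hom_objs[OF pg_cat[OF X] v] by auto
  show "germ_eq X (fst (pro_id e), \<lambda>x. pmap X v (snd (pro_id e) x)) (fst (pro_id d), snd (pro_id d))"
    unfolding pro_id_def fst_conv snd_conv
    by (rule germ_eqI[OF id_hom[OF pg_cat[OF X] e] v]) (simp add: pmap_id[OF X e])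
qed

lemma pro_mor_comp:
  assumes X: "pro_group X" and Y: "pro_group Y" and Zc: "category (pidx Z)"
    and r: "pro_mor X Y \<rho>" and s: "pro_mor Y Z \<sigma>"
  shows "pro_mor X Z (pro_comp \<sigma> \<rho>)"
proof (rule pro_morI[OF Zc])
  fix j assume j: "j \<in> Obj (pidx Z)"
  note s1 = pro_morD1[OF s j]
  note r1 = pro_morD1[OF r s1(1)]
  show "fst (pro_comp \<sigma> \<rho> j) \<in> Obj (pidx X) \<and>
          snd (pro_comp \<sigma> \<rho> j) \<in> hom (pgrp X (fst (pro_comp \<sigma> \<rho> j))) (pgrp Z j)"
    unfolding pro_comp_def using r1 s1 hom_compose by auto
next
  fix v d e assume v: "v \<in> cat_hom (pidx Z) d e"
  have d: "d \<in> Obj (pidx Z)" and e: "e \<in> Obj (pidx Z)" using hom_objs[OF Zc v] by auto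
  define sd where "sd = fst (\<sigma> d)"
  define se where "se = fst (\<sigma> e)"
  have sd: "sd \<in> Obj (pidx Y)" and se: "se \<in> Obj (pidx Y)"
    using pro_morD1[OF s d] pro_morD1[OF s e] sd_def se_def by auto
  obtain m u u' where u: "u \<in> cat_hom (pidx Y) se m" "u' \<in> cat_hom (pidx Y) sd m"
    "\<And>y. y \<in> carrier (pgrp Y m) \<Longrightarrow> pmap Z v (snd (\<sigma> e) (pmap Y u y)) = snd (\<sigma> d) (pmap Y u' y)"
    using pro_morD2[OF s v] unfolding sd_def se_def by (elim germ_eqE) blast
  have m: "m \<in> Obj (pidx Y)" using hom_objs[OF pg_cat[OF Y] u(1)] by auto
  note rm = pro_morD1[OF r m]
  have 1: "germ_eq X (fst (\<rho> se), \<lambda>x. pmap Z v (snd (\<sigma> e) (snd (\<rho> se) x)))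
                     (fst (\<rho> m), \<lambda>x. pmap Z v (snd (\<sigma> e) (pmap Y u (snd (\<rho> m) x))))"
    using germ_post[OF germ_sym[OF pro_morD2[OF r u(1)]], of "\<lambda>y. pmap Z v (snd (\<sigma> e) y)"] .
  have 2: "germ_eq X (fst (\<rho> m), \<lambda>x. pmap Z v (snd (\<sigma> e) (pmap Y u (snd (\<rho> m) x))))
                     (fst (\<rho> m), \<lambda>x. snd (\<sigma> d) (pmap Y u' (snd (\<rho> m) x)))"
    by (rule germ_cong[OF X rm(1)]) (simp add: u(3) hom_in_carrier[OF rm(2)])
  have 3: "germ_eq X (fst (\<rho> m), \<lambda>x. snd (\<sigma> d) (pmap Y u' (snd (\<rho> m) x)))
                     (fst (\<rho> sd), \<lambda>x. snd (\<sigma> d) (snd (\<rho> sd) x))"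
    using germ_post[OF pro_morD2[OF r u(2)], of "snd (\<sigma> d)"] .
  show "germ_eq X (fst (pro_comp \<sigma> \<rho> e), \<lambda>x. pmap Z v (snd (pro_comp \<sigma> \<rho> e) x))
                  (fst (pro_comp \<sigma> \<rho> d), snd (pro_comp \<sigma> \<rho> d))"
    unfolding pro_comp_def using germ_trans[OF X 1 germ_trans[OF X 2 3]]
    by (simp add: sd_def se_def comp_def)
qed

lemma pro_comp_assoc: "pro_comp a (pro_comp b c) = pro_comp (pro_comp a b) c"
  unfolding pro_comp_def by (auto simp: comp_def)

lemma pro_pow_0: "pro_pow \<phi> 0 = pro_id" by (simp add: pro_pow_def)
lemma pro_pow_Suc: "pro_pow \<phi> (Suc r) = pro_comp \<phi> (pro_pow \<phi> r)" by (simp add: pro_pow_def)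

lemma pro_comp_id_left: "pro_comp pro_id \<rho> = \<rho>"
  unfolding pro_comp_def pro_id_def by auto
lemma pro_comp_id_right: "pro_comp \<rho> pro_id = \<rho>"
  unfolding pro_comp_def pro_id_def by auto

lemma pro_pow_Suc': "pro_pow \<phi> (Suc r) = pro_comp (pro_pow \<phi> r) \<phi>"
proof (induction r)
  case 0 then show ?case by (simp add: pro_pow_Suc pro_pow_0 pro_comp_id_left pro_comp_id_right)
next
  case (Suc r)
  have "pro_pow \<phi> (Suc (Suc r)) = pro_comp \<phi> (pro_comp (pro_pow \<phi> r) \<phi>)"
    using Suc by (simp add: pro_pow_Suc[of _ "Suc r"])
  also have "\<dots> = pro_comp (pro_pow \<phi> (Suc r)) \<phi>"
    by (simp add: pro_comp_assoc pro_pow_Suc)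
  finally show ?case .
qed

lemma pro_mor_pow:
  assumes X: "pro_group X" and p: "pro_mor X X \<phi>"
  shows "pro_mor X X (pro_pow \<phi> r)"
  by (induction r) (simp_all add: pro_pow_0 pro_pow_Suc pro_mor_id[OF X] pro_mor_comp[OF X X pg_cat[OF X] _ p])




locale psys =
  fixes G :: "('i,'m,'a) pro_obj" and \<phi> :: "'i \<Rightarrow> 'i \<times> ('a \<Rightarrow> 'a)" and n :: nat
  assumes G: "pro_group G" and phi: "pro_mor G G \<phi>" and n: "n \<ge> 1"
    and pown: "pro_eq G G (pro_pow \<phi> n) pro_id"
begin

abbreviation "I \<equiv> pidx G"
abbreviation "Gr \<equiv> pgrp G"

lemma C: "category I" using pg_cat[OF G] .

definition A :: "'i \<Rightarrow> nat \<Rightarrow> 'i" where "A k r = fst (pro_pow \<phi> r k)"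
definition Fm :: "'i \<Rightarrow> nat \<Rightarrow> 'a \<Rightarrow> 'a" where "Fm k r = snd (pro_pow \<phi> r k)"

lemma A0: "A k 0 = k" and Fm0: "Fm k 0 = id"
  by (simp_all add: A_def Fm_def pro_pow_0 pro_id_def)

lemma ASuc: "A k (Suc r) = A (fst (\<phi> k)) r"
  and FmSuc: "Fm k (Suc r) = snd (\<phi> k) \<circ> Fm (fst (\<phi> k)) r"
  by (simp_all add: A_def Fm_def pro_pow_Suc pro_comp_def)

lemma powmor: "pro_mor G G (pro_pow \<phi> r)" using pro_mor_pow[OF G phi] .

lemma A_obj: "k \<in> Obj I \<Longrightarrow> A k r \<in> Obj I"
  using pro_morD1[OF powmor] by (simp add: A_def)

lemma Fm_hom: "k \<in> Obj I \<Longrightarrow> Fm k r \<in> hom (Gr (A k r)) (Gr k)"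
  using pro_morD1[OF powmor] by (simp add: A_def Fm_def)

lemma phi_obj: "k \<in> Obj I \<Longrightarrow> fst (\<phi> k) \<in> Obj I"
  using pro_morD1[OF phi] by simp

lemma phi_hom: "k \<in> Obj I \<Longrightarrow> snd (\<phi> k) \<in> hom (Gr (fst (\<phi> k))) (Gr k)"
  using pro_morD1[OF phi] by simp

lemma grp: "k \<in> Obj I \<Longrightarrow> group (Gr k)" using pg_group[OF G] .

section \<open>The new index set\<close>

definition J :: "('i set \<times> 'm set) set" where
  "J = {(F,M). finite F \<and> finite M \<and> F \<subseteq> Obj I \<and> M \<subseteq> Arr I \<and>
              (\<forall>v\<in>M. Dom I v \<in> F \<and> Cod I v \<in> F)}"

definition leq :: "('i set \<times> 'm set) \<Rightarrow> ('i set \<times> 'm set) \<Rightarrow> bool" where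
  "leq p q \<longleftrightarrow> fst p \<subseteq> fst q \<and> snd p \<subseteq> snd q"

lemma J_iff: "j \<in> J \<longleftrightarrow> finite (fst j) \<and> finite (snd j) \<and> fst j \<subseteq> Obj I \<and> snd j \<subseteq> Arr I \<and>
              (\<forall>v\<in>snd j. Dom I v \<in> fst j \<and> Cod I v \<in> fst j)"
  by (cases j) (simp add: J_def)

lemma J_arr: "j \<in> J \<Longrightarrow> v \<in> snd j \<Longrightarrow> v \<in> cat_hom I (Dom I v) (Cod I v) \<and> Dom I v \<in> fst j \<and> Cod I v \<in> fst j"
  by (auto simp: J_iff cat_hom_def)

lemma directed: "directed_set J leq"
  unfolding directed_set_def
proof (intro conjI ballI)
  show "J \<noteq> {}" by (auto simp: J_def)
next
  fix a b assume "a \<in> J" "b \<in> J"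
  then show "\<exists>c\<in>J. leq a c \<and> leq b c"
    by (intro bexI[of _ "(fst a \<union> fst b, snd a \<union> snd b)"]) (auto simp: J_iff leq_def)
qed (auto simp: leq_def)

section \<open>The new groups\<close>

definition inL :: "('i set \<times> 'm set) \<Rightarrow> ('i \<Rightarrow> nat \<Rightarrow> 'a) \<Rightarrow> bool" where
  "inL j x \<longleftrightarrow>
     (\<forall>k r. (k \<in> fst j \<and> r < n \<longrightarrow> x k r \<in> carrier (Gr k)) \<and>
            (\<not> (k \<in> fst j \<and> r < n) \<longrightarrow> x k r = undefined)) \<and>
     (\<forall>v\<in>snd j. \<forall>r<n. pmap G v (x (Cod I v) r) = x (Dom I v) r) \<and>
     (\<forall>k\<in>fst j. fst (\<phi> k) \<in> fst j \<longrightarrow> (\<forall>r<n. snd (\<phi> k) (x (fst (\<phi> k)) r) = x k (Suc r mod n)))"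

lemma inLI:
  assumes "\<And>k r. k \<in> fst j \<Longrightarrow> r < n \<Longrightarrow> x k r \<in> carrier (Gr k)"
    "\<And>k r. \<not> (k \<in> fst j \<and> r < n) \<Longrightarrow> x k r = undefined"
    "\<And>v r. v \<in> snd j \<Longrightarrow> r < n \<Longrightarrow> pmap G v (x (Cod I v) r) = x (Dom I v) r"
    "\<And>k r. k \<in> fst j \<Longrightarrow> fst (\<phi> k) \<in> fst j \<Longrightarrow> r < n \<Longrightarrow> snd (\<phi> k) (x (fst (\<phi> k)) r) = x k (Suc r mod n)"
  shows "inL j x"
  using assms unfolding inL_def by blast

lemma inLD:
  assumes "inL j x"
  shows "\<And>k r. k \<in> fst j \<Longrightarrow> r < n \<Longrightarrow> x k r \<in> carrier (Gr k)"
    "\<And>k r. \<not> (k \<in> fst j \<and> r < n) \<Longrightarrow> x k r = undefined"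
    "\<And>v r. v \<in> snd j \<Longrightarrow> r < n \<Longrightarrow> pmap G v (x (Cod I v) r) = x (Dom I v) r"
    "\<And>k r. k \<in> fst j \<Longrightarrow> fst (\<phi> k) \<in> fst j \<Longrightarrow> r < n \<Longrightarrow> snd (\<phi> k) (x (fst (\<phi> k)) r) = x k (Suc r mod n)"
  using assms unfolding inL_def by blast+

lemma inL_ext:
  assumes "inL j x" "inL j y" "\<And>k r. k \<in> fst j \<Longrightarrow> r < n \<Longrightarrow> x k r = y k r"
  shows "x = y"
proof (intro ext)
  fix k r show "x k r = y k r"
    using assms inLD(2)[OF assms(1)] inLD(2)[OF assms(2)] by (cases "k \<in> fst j \<and> r < n") auto
qed

definition mulF where
  "mulF F x y = (\<lambda>k r. if k \<in> F \<and> r < n then x k r \<otimes>\<^bsub>Gr k\<^esub> y k r else undefined)"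
definition oneF where
  "oneF F = (\<lambda>k r. if k \<in> F \<and> r < n then \<one>\<^bsub>Gr k\<^esub> else undefined)"
definition invF where
  "invF F x = (\<lambda>k r. if k \<in> F \<and> r < n then inv\<^bsub>Gr k\<^esub> (x k r) else undefined)"

definition Hg :: "('i set \<times> 'm set) \<Rightarrow> ('i \<Rightarrow> nat \<Rightarrow> 'a) set monoid" where
  "Hg j = \<lparr>carrier = (\<lambda>x. {x}) ` {x. inL j x},
           mult = (\<lambda>P Q. {mulF (fst j) (the_elem P) (the_elem Q)}),
           one = {oneF (fst j)}\<rparr>"

lemma Hg_carrier: "P \<in> carrier (Hg j) \<longleftrightarrow> (\<exists>x. P = {x} \<and> inL j x)"
  by (auto simp: Hg_def)

lemma Hg_mult: "{x} \<otimes>\<^bsub>Hg j\<^esub> {y} = {mulF (fst j) x y}"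
  by (simp add: Hg_def)

lemma Hg_one: "\<one>\<^bsub>Hg j\<^esub> = {oneF (fst j)}"
  by (simp add: Hg_def)

lemma Jobj: "j \<in> J \<Longrightarrow> k \<in> fst j \<Longrightarrow> k \<in> Obj I"
  by (auto simp: J_iff)

lemma inL_mul:
  assumes j: "j \<in> J" and x: "inL j x" and y: "inL j y"
  shows "inL j (mulF (fst j) x y)"
proof (rule inLI)
  fix k r assume "k \<in> fst j" "r < n"
  then show "mulF (fst j) x y k r \<in> carrier (Gr k)"
    using inLD(1)[OF x] inLD(1)[OF y] group.is_monoid[OF grp[OF Jobj[OF j]]] monoid.m_closed
    by (fastforce simp: mulF_def)
next
  fix k r assume "\<not> (k \<in> fst j \<and> r < n)" then show "mulF (fst j) x y k r = undefined" unfolding mulF_def by auto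
next
  fix v r assume v: "v \<in> snd j" and r: "r < n"
  note vv = J_arr[OF j v]
  show "pmap G v (mulF (fst j) x y (Cod I v) r) = mulF (fst j) x y (Dom I v) r"
    using vv r inLD(1)[OF x] inLD(1)[OF y] inLD(3)[OF x v r] inLD(3)[OF y v r]
    by (simp add: mulF_def hom_mult[OF pmap_hom[OF G conjunct1[OF vv]]])
next
  fix k r assume k: "k \<in> fst j" and pk: "fst (\<phi> k) \<in> fst j" and r: "r < n"
  show "snd (\<phi> k) (mulF (fst j) x y (fst (\<phi> k)) r) = mulF (fst j) x y k (Suc r mod n)"
    using k pk r inLD(1)[OF x] inLD(1)[OF y] inLD(4)[OF x k pk r] inLD(4)[OF y k pk r] n
    by (simp add: mulF_def hom_mult[OF phi_hom[OF Jobj[OF j k]]])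
qed

lemma inL_one:
  assumes j: "j \<in> J"
  shows "inL j (oneF (fst j))"
proof (rule inLI)
  fix k r assume "k \<in> fst j" "r < n"
  then show "oneF (fst j) k r \<in> carrier (Gr k)"
    using group.is_monoid[OF grp[OF Jobj[OF j]]] monoid.one_closed by (fastforce simp: oneF_def)
next
  fix k r assume "\<not> (k \<in> fst j \<and> r < n)" then show "oneF (fst j) k r = undefined" unfolding oneF_def by auto
next
  fix v r assume v: "v \<in> snd j" and r: "r < n"
  note vv = J_arr[OF j v]
  show "pmap G v (oneF (fst j) (Cod I v) r) = oneF (fst j) (Dom I v) r"
    using vv r hom_one[OF pmap_hom[OF G conjunct1[OF vv]] grp grp] Jobj[OF j]
    by (simp add: oneF_def)
next
  fix k r assume k: "k \<in> fst j" and pk: "fst (\<phi> k) \<in> fst j" and r: "r < n"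
  show "snd (\<phi> k) (oneF (fst j) (fst (\<phi> k)) r) = oneF (fst j) k (Suc r mod n)"
    using k pk r n hom_one[OF phi_hom[OF Jobj[OF j k]] grp grp] Jobj[OF j]
    by (simp add: oneF_def)
qed

lemma inL_inv:
  assumes j: "j \<in> J" and x: "inL j x"
  shows "inL j (invF (fst j) x)"
proof (rule inLI)
  fix k r assume "k \<in> fst j" "r < n"
  then show "invF (fst j) x k r \<in> carrier (Gr k)"
    using inLD(1)[OF x] group.inv_closed[OF grp[OF Jobj[OF j]]] by (fastforce simp: invF_def)
next
  fix k r assume "\<not> (k \<in> fst j \<and> r < n)" then show "invF (fst j) x k r = undefined" unfolding invF_def by auto
next
  fix v r assume v: "v \<in> snd j" and r: "r < n"
  note vv = J_arr[OF j v]
  have gh: "group_hom (Gr (Cod I v)) (Gr (Dom I v)) (pmap G v)"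
    using vv Jobj[OF j] grp pmap_hom[OF G conjunct1[OF vv]]
    by (simp add: group_hom_def group_hom_axioms_def)
  show "pmap G v (invF (fst j) x (Cod I v) r) = invF (fst j) x (Dom I v) r"
    using vv r inLD(1)[OF x] inLD(3)[OF x v r] group_hom.hom_inv[OF gh]
    by (simp add: invF_def)
next
  fix k r assume k: "k \<in> fst j" and pk: "fst (\<phi> k) \<in> fst j" and r: "r < n"
  have gh: "group_hom (Gr (fst (\<phi> k))) (Gr k) (snd (\<phi> k))"
    using k pk Jobj[OF j] grp phi_hom
    by (simp add: group_hom_def group_hom_axioms_def)
  show "snd (\<phi> k) (invF (fst j) x (fst (\<phi> k)) r) = invF (fst j) x k (Suc r mod n)"
    using k pk r n inLD(1)[OF x] inLD(4)[OF x k pk r] group_hom.hom_inv[OF gh]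
    by (simp add: invF_def)
qed

lemma Hg_group:
  assumes j: "j \<in> J" shows "group (Hg j)"
proof (rule groupI)
  fix P Q assume "P \<in> carrier (Hg j)" "Q \<in> carrier (Hg j)"
  then obtain x y where "P = {x}" "Q = {y}" "inL j x" "inL j y" by (auto simp: Hg_carrier)
  then show "P \<otimes>\<^bsub>Hg j\<^esub> Q \<in> carrier (Hg j)"
    by (auto simp: Hg_mult Hg_carrier inL_mul[OF j])
next
  show "\<one>\<^bsub>Hg j\<^esub> \<in> carrier (Hg j)" by (auto simp: Hg_one Hg_carrier inL_one[OF j])
next
  fix P Q R assume "P \<in> carrier (Hg j)" "Q \<in> carrier (Hg j)" "R \<in> carrier (Hg j)"
  then obtain x y z where e: "P = {x}" "Q = {y}" "R = {z}" and xyz: "inL j x" "inL j y" "inL j z"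
    by (auto simp: Hg_carrier)
  have "mulF (fst j) (mulF (fst j) x y) z = mulF (fst j) x (mulF (fst j) y z)"
    using inLD(1)[OF xyz(1)] inLD(1)[OF xyz(2)] inLD(1)[OF xyz(3)]
      group.is_monoid[OF grp[OF Jobj[OF j]]] monoid.m_assoc
    by (fastforce simp: mulF_def)
  then show "P \<otimes>\<^bsub>Hg j\<^esub> Q \<otimes>\<^bsub>Hg j\<^esub> R = P \<otimes>\<^bsub>Hg j\<^esub> (Q \<otimes>\<^bsub>Hg j\<^esub> R)"
    by (simp add: e Hg_mult)
next
  fix P assume "P \<in> carrier (Hg j)"
  then obtain x where e: "P = {x}" and x: "inL j x" by (auto simp: Hg_carrier)
  have "mulF (fst j) (oneF (fst j)) x = x"
    by (rule inL_ext[OF inL_mul[OF j inL_one[OF j] x] x])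
       (use inLD(1)[OF x] group.is_monoid[OF grp[OF Jobj[OF j]]] monoid.l_one in \<open>fastforce simp: mulF_def oneF_def\<close>)
  then show "\<one>\<^bsub>Hg j\<^esub> \<otimes>\<^bsub>Hg j\<^esub> P = P" by (simp add: e Hg_one Hg_mult)
next
  fix P assume "P \<in> carrier (Hg j)"
  then obtain x where e: "P = {x}" and x: "inL j x" by (auto simp: Hg_carrier)
  have "mulF (fst j) (invF (fst j) x) x = oneF (fst j)"
    by (rule inL_ext[OF inL_mul[OF j inL_inv[OF j x] x] inL_one[OF j]])
       (use inLD(1)[OF x] group.l_inv[OF grp[OF Jobj[OF j]]] in \<open>fastforce simp: mulF_def oneF_def invF_def\<close>)
  then show "\<exists>Q\<in>carrier (Hg j). Q \<otimes>\<^bsub>Hg j\<^esub> P = \<one>\<^bsub>Hg j\<^esub>"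
    using inL_inv[OF j x] by (intro bexI[of _ "{invF (fst j) x}"]) (auto simp: e Hg_mult Hg_one Hg_carrier)
qed

end



lemma dircat_hom: "u \<in> cat_hom (dircat J leq) i j \<longleftrightarrow> u = (i,j) \<and> i \<in> J \<and> j \<in> J \<and> leq i j"
  by (auto simp: cat_hom_def dircat_def)

lemma dircat_filtered:
  assumes "directed_set J leq" shows "filtered (dircat J leq)"
proof -
  have ne: "J \<noteq> {}" and rf: "\<And>a. a \<in> J \<Longrightarrow> leq a a"
    and tr: "\<And>a b c. a \<in> J \<Longrightarrow> b \<in> J \<Longrightarrow> c \<in> J \<Longrightarrow> leq a b \<Longrightarrow> leq b c \<Longrightarrow> leq a c"
    and ub0: "\<And>a b. a \<in> J \<Longrightarrow> b \<in> J \<Longrightarrow> \<exists>c\<in>J. leq a c \<and> leq b c"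
    using assms unfolding directed_set_def by blast+
  have cat: "category (dircat J leq)"
    unfolding category_def cat_hom_def dircat_def using rf tr by auto
  have ub: "\<forall>i\<in>Obj (dircat J leq). \<forall>j\<in>Obj (dircat J leq). \<exists>k\<in>Obj (dircat J leq).
      cat_hom (dircat J leq) i k \<noteq> {} \<and> cat_hom (dircat J leq) j k \<noteq> {}"
  proof (intro ballI)
    fix i j assume "i \<in> Obj (dircat J leq)" "j \<in> Obj (dircat J leq)"
    then have ij: "i \<in> J" "j \<in> J" by (simp_all add: dircat_def)
    then obtain k where k: "k \<in> J" "leq i k" "leq j k" using ub0 by blast
    have "(i,k) \<in> cat_hom (dircat J leq) i k" "(j,k) \<in> cat_hom (dircat J leq) j k"
      using ij k by (simp_all add: dircat_hom)
    then show "\<exists>k\<in>Obj (dircat J leq). cat_hom (dircat J leq) i k \<noteq> {} \<and> cat_hom (dircat J leq) j k \<noteq> {}"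
      using k(1) by (intro bexI[of _ k]) (auto simp: dircat_def)
  qed
  have co: "\<forall>i j u v. u \<in> cat_hom (dircat J leq) i j \<and> v \<in> cat_hom (dircat J leq) i j \<longrightarrow>
         (\<exists>k w. w \<in> cat_hom (dircat J leq) j k \<and> Comp (dircat J leq) w u = Comp (dircat J leq) w v)"
  proof (intro allI impI)
    fix i j u v assume "u \<in> cat_hom (dircat J leq) i j \<and> v \<in> cat_hom (dircat J leq) i j"
    then have "u = (i,j)" "v = (i,j)" "j \<in> J" by (simp_all add: dircat_hom)
    moreover have "(j,j) \<in> cat_hom (dircat J leq) j j" using \<open>j \<in> J\<close> rf by (simp add: dircat_hom)
    ultimately show "\<exists>k w. w \<in> cat_hom (dircat J leq) j k \<and> Comp (dircat J leq) w u = Comp (dircat J leq) w v"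
      by blast
  qed
  have "Obj (dircat J leq) \<noteq> {}" using ne by (simp add: dircat_def)
  then show ?thesis unfolding filtered_def using cat ub co by blast
qed

context psys begin

definition restrF where
  "restrF F x = (\<lambda>k r. if k \<in> F \<and> r < n then x k r else undefined)"

definition rmap where
  "rmap u P = {restrF (fst (fst u)) (the_elem P)}"

definition H :: "('i set \<times> 'm set, ('i set \<times> 'm set) \<times> ('i set \<times> 'm set), ('i \<Rightarrow> nat \<Rightarrow> 'a) set) pro_obj" where
  "H = \<lparr>pidx = dircat J leq, pgrp = Hg, pmap = rmap\<rparr>"

lemma H_simps[simp]: "pidx H = dircat J leq" "pgrp H = Hg" "pmap H = rmap"
  by (simp_all add: H_def)

lemma inL_restr:
  assumes a: "a \<in> J" and b: "b \<in> J" and ab: "leq a b" and x: "inL b x"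
  shows "inL a (restrF (fst a) x)"
proof (rule inLI)
  fix k r assume "k \<in> fst a" "r < n" then show "restrF (fst a) x k r \<in> carrier (Gr k)"
    using ab inLD(1)[OF x] by (auto simp: restrF_def leq_def)
next
  fix k r assume "\<not> (k \<in> fst a \<and> r < n)" then show "restrF (fst a) x k r = undefined"
    by (auto simp: restrF_def)
next
  fix v r assume v: "v \<in> snd a" "r < n"
  then show "pmap G v (restrF (fst a) x (Cod I v) r) = restrF (fst a) x (Dom I v) r"
    using J_arr[OF a v(1)] inLD(3)[OF x, of v r] ab by (auto simp: restrF_def leq_def)
next
  fix k r assume "k \<in> fst a" "fst (\<phi> k) \<in> fst a" "r < n"
  then show "snd (\<phi> k) (restrF (fst a) x (fst (\<phi> k)) r) = restrF (fst a) x k (Suc r mod n)"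
    using inLD(4)[OF x, of k r] ab n by (auto simp: restrF_def leq_def)
qed

lemma restr_self: "inL j x \<Longrightarrow> restrF (fst j) x = x"
  using inLD(2) by (fastforce simp: restrF_def)

lemma H_group: "pro_group H"
  unfolding pro_group_def
proof (intro conjI ballI impI)
  show "filtered (pidx H)" using dircat_filtered[OF directed] by simp
next
  fix i assume "i \<in> Obj (pidx H)" then show "group (pgrp H i)" using Hg_group by (simp add: dircat_def)
next
  fix u assume "u \<in> Arr (pidx H)"
  then obtain a b where u: "u = (a,b)" "a \<in> J" "b \<in> J" "leq a b" by (auto simp: dircat_def)
  show "pmap H u \<in> hom (pgrp H (Cod (pidx H) u)) (pgrp H (Dom (pidx H) u))"
    unfolding hom_def
  proof (intro CollectI conjI ballI Pi_I)
    fix P assume "P \<in> carrier (pgrp H (Cod (pidx H) u))"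
    then obtain x where "P = {x}" "inL b x" by (auto simp: u dircat_def Hg_carrier)
    then show "pmap H u P \<in> carrier (pgrp H (Dom (pidx H) u))"
      using inL_restr[OF u(2-4)] by (auto simp: u dircat_def Hg_carrier rmap_def)
  next
    fix P Q assume "P \<in> carrier (pgrp H (Cod (pidx H) u))" "Q \<in> carrier (pgrp H (Cod (pidx H) u))"
    then obtain x y where "P = {x}" "Q = {y}" by (auto simp: u dircat_def Hg_carrier)
    moreover have "restrF (fst a) (mulF (fst b) x y) = mulF (fst a) (restrF (fst a) x) (restrF (fst a) y)"
      using u(4) by (auto intro!: ext simp: restrF_def mulF_def leq_def)
    ultimately show "pmap H u (P \<otimes>\<^bsub>pgrp H (Cod (pidx H) u)\<^esub> Q) =
       pmap H u P \<otimes>\<^bsub>pgrp H (Dom (pidx H) u)\<^esub> pmap H u Q"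
      by (simp add: u dircat_def Hg_mult rmap_def)
  qed
next
  fix i P assume "i \<in> Obj (pidx H)" "P \<in> carrier (pgrp H i)"
  then obtain x where "P = {x}" "inL i x" by (auto simp: Hg_carrier)
  then show "pmap H (Ident (pidx H) i) P = P"
    by (simp add: dircat_def rmap_def restr_self)
next
  fix u v P assume "u \<in> Arr (pidx H)" "v \<in> Arr (pidx H)" "Cod (pidx H) u = Dom (pidx H) v"
    and P: "P \<in> carrier (pgrp H (Cod (pidx H) v))"
  then obtain a b c where uv: "u = (a,b)" "v = (b,c)" "leq a b" by (auto simp: dircat_def)
  obtain x where "P = {x}" using P by (auto simp: Hg_carrier)
  moreover have "restrF (fst a) x = restrF (fst a) (restrF (fst b) x)"
    using uv(3) by (auto intro!: ext simp: restrF_def leq_def)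
  ultimately show "pmap H (Comp (pidx H) v u) P = pmap H u (pmap H v P)"
    by (simp add: uv dircat_def rmap_def)
qed

end



context psys begin

definition psiF where
  "psiF F x = (\<lambda>k r. if k \<in> F \<and> r < n then x k (Suc r mod n) else undefined)"

definition psi where
  "psi j P = {psiF (fst j) (the_elem P)}"

lemma inL_psi:
  assumes j: "j \<in> J" and x: "inL j x" shows "inL j (psiF (fst j) x)"
proof (rule inLI)
  fix k r assume "k \<in> fst j" "r < n" then show "psiF (fst j) x k r \<in> carrier (Gr k)"
    using inLD(1)[OF x] n by (auto simp: psiF_def)
next
  fix k r assume "\<not> (k \<in> fst j \<and> r < n)" then show "psiF (fst j) x k r = undefined"
    by (auto simp: psiF_def)
next
  fix v r assume v: "v \<in> snd j" "r < n"
  then show "pmap G v (psiF (fst j) x (Cod I v) r) = psiF (fst j) x (Dom I v) r"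
    using J_arr[OF j v(1)] inLD(3)[OF x v(1), of "Suc r mod n"] n by (auto simp: psiF_def)
next
  fix k r assume "k \<in> fst j" "fst (\<phi> k) \<in> fst j" "r < n"
  then show "snd (\<phi> k) (psiF (fst j) x (fst (\<phi> k)) r) = psiF (fst j) x k (Suc r mod n)"
    using inLD(4)[OF x, of k "Suc r mod n"] n by (auto simp: psiF_def)
qed

lemma psi_pow:
  assumes "inL j x"
  shows "(psi j ^^ m) {x} = {\<lambda>k r. if k \<in> fst j \<and> r < n then x k ((r + m) mod n) else undefined}"
proof (induction m)
  case 0 then show ?case using inLD(2)[OF assms] by (auto intro!: ext)
next
  case (Suc m)
  have "(psi j ^^ Suc m) {x} = psi j ((psi j ^^ m) {x})" by simp
  also have "\<dots> = {\<lambda>k r. if k \<in> fst j \<and> r < n then x k ((r + Suc m) mod n) else undefined}"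
    unfolding Suc psi_def psiF_def using n
    by (auto intro!: ext simp: mod_add_left_eq)
  finally show ?case .
qed

lemma psi_n: "inL j x \<Longrightarrow> (psi j ^^ n) {x} = {x}"
  using psi_pow[of j x n] inLD(2)[of j x] by (auto intro!: ext)

lemma psi_carrier: "j \<in> J \<Longrightarrow> P \<in> carrier (Hg j) \<Longrightarrow> psi j P \<in> carrier (Hg j)"
  using inL_psi[of j] by (auto simp: Hg_carrier psi_def simp del: prod.collapse)

lemma psi_hom: "j \<in> J \<Longrightarrow> psi j \<in> hom (Hg j) (Hg j)"
  unfolding hom_def
proof (intro CollectI conjI ballI Pi_I)
  fix P assume "j \<in> J" "P \<in> carrier (Hg j)" then show "psi j P \<in> carrier (Hg j)" by (rule psi_carrier)
next
  fix P Q assume "P \<in> carrier (Hg j)" "Q \<in> carrier (Hg j)"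
  then obtain x y where "P = {x}" "Q = {y}" by (auto simp: Hg_carrier)
  moreover have "psiF (fst j) (mulF (fst j) x y) = mulF (fst j) (psiF (fst j) x) (psiF (fst j) y)"
    using n by (auto intro!: ext simp: psiF_def mulF_def)
  ultimately show "psi j (P \<otimes>\<^bsub>Hg j\<^esub> Q) = psi j P \<otimes>\<^bsub>Hg j\<^esub> psi j Q"
    by (simp add: Hg_mult psi_def)
qed

lemma psi_powc: "P \<in> carrier (Hg j) \<Longrightarrow> (psi j ^^ n) P = P"
  using psi_n[of j] by (auto simp: Hg_carrier)

lemma psi_pow_carrier: "j \<in> J \<Longrightarrow> P \<in> carrier (Hg j) \<Longrightarrow> (psi j ^^ m) P \<in> carrier (Hg j)"
  by (induction m) (auto simp: psi_carrier)

lemma psi_iso: "j \<in> J \<Longrightarrow> psi j \<in> iso (Hg j) (Hg j)"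
  unfolding iso_def
proof (intro CollectI conjI psi_hom)
  assume j: "j \<in> J"
  obtain m where nm: "n = Suc m" using n by (cases n) auto
  show "bij_betw (psi j) (carrier (Hg j)) (carrier (Hg j))"
  proof (rule bij_betw_byWitness[where f'="psi j ^^ m"])
    show "\<forall>a\<in>carrier (Hg j). (psi j ^^ m) (psi j a) = a"
    proof
      fix a assume a: "a \<in> carrier (Hg j)"
      have "(psi j ^^ m) (psi j a) = psi j ((psi j ^^ m) a)" by (rule funpow_swap1[symmetric])
      also have "\<dots> = (psi j ^^ n) a" by (simp add: nm)
      finally show "(psi j ^^ m) (psi j a) = a" using psi_powc[OF a] by simp
    qed
    show "\<forall>a\<in>carrier (Hg j). psi j ((psi j ^^ m) a) = a"
    proof
      fix a assume a: "a \<in> carrier (Hg j)"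
      have "psi j ((psi j ^^ m) a) = (psi j ^^ n) a" by (simp add: nm)
      then show "psi j ((psi j ^^ m) a) = a" using psi_powc[OF a] by simp
    qed
  qed (use psi_carrier[OF j] psi_pow_carrier[OF j] in auto)
qed

lemma psi_restr:
  assumes "leq a b" "P \<in> carrier (Hg b)"
  shows "rmap (a,b) (psi b P) = psi a (rmap (a,b) P)"
proof -
  obtain x where "P = {x}" using assms(2) by (auto simp: Hg_carrier)
  moreover have "restrF (fst a) (psiF (fst b) x) = psiF (fst a) (restrF (fst a) x)"
    using assms(1) n by (auto intro!: ext simp: restrF_def psiF_def leq_def)
  ultimately show ?thesis by (simp add: rmap_def psi_def)
qed

end



lemma germ_prod:
  assumes X: "pro_group X" and S: "finite S" and c1: "c1 \<in> Obj (pidx X)" and c2: "c2 \<in> Obj (pidx X)"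
    and g: "\<And>s. s \<in> S \<Longrightarrow> germ_eq X (c1, ga s) (c2, gb s)"
  shows "\<exists>d u u'. u \<in> cat_hom (pidx X) c1 d \<and> u' \<in> cat_hom (pidx X) c2 d \<and>
           (\<forall>x\<in>carrier (pgrp X d). \<forall>s\<in>S. ga s (pmap X u x) = gb s (pmap X u' x))"
proof -
  note C = pg_cat[OF X]
  obtain d p q where pq: "p \<in> cat_hom (pidx X) c1 d" "q \<in> cat_hom (pidx X) c2 d"
    using pg_ub[OF X c1 c2] by blast
  have d: "d \<in> Obj (pidx X)" using hom_objs[OF C pq(1)] by auto
  have gg: "\<And>s. s \<in> S \<Longrightarrow> germ_eq X (d, \<lambda>x. ga s (pmap X p x)) (d, \<lambda>x. gb s (pmap X q x))"
    using germ_two[OF X g pq] .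
  from germ_multi[OF X S d, where F="\<lambda>s x. ga s (pmap X p x)" and G="\<lambda>s x. gb s (pmap X q x)", OF gg] obtain d' w where w: "w \<in> cat_hom (pidx X) d d'"
    "\<forall>s\<in>S. \<forall>x\<in>carrier (pgrp X d'). ga s (pmap X p (pmap X w x)) = gb s (pmap X q (pmap X w x))"
    by blast
  show ?thesis
  proof (intro exI conjI ballI)
    show "Comp (pidx X) w p \<in> cat_hom (pidx X) c1 d'" using comp_hom[OF C pq(1) w(1)] .
    show "Comp (pidx X) w q \<in> cat_hom (pidx X) c2 d'" using comp_hom[OF C pq(2) w(1)] .
    fix x s assume x: "x \<in> carrier (pgrp X d')" and s: "s \<in> S"
    show "ga s (pmap X (Comp (pidx X) w p) x) = gb s (pmap X (Comp (pidx X) w q) x)"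
      using w(2) s x pmap_comp[OF X pq(1) w(1) x] pmap_comp[OF X pq(2) w(1) x] by simp
  qed
qed

context psys begin

definition famF where
  "famF F \<beta> x = (\<lambda>k r. if k \<in> F \<and> r < n then Fm k r (pmap G (\<beta> k r) x) else undefined)"

definition cone_ok where
  "cone_ok j c \<beta> \<longleftrightarrow> c \<in> Obj I \<and> (\<forall>k\<in>fst j. \<forall>r<n. \<beta> k r \<in> cat_hom I (A k r) c) \<and>
      (\<forall>x\<in>carrier (Gr c). inL j (famF (fst j) \<beta> x))"

lemma powD2: "v \<in> cat_hom I d e \<Longrightarrow>
   germ_eq G (A e r, \<lambda>x. pmap G v (Fm e r x)) (A d r, Fm d r)"
  using pro_morD2[OF powmor, of v d e r] by (simp add: A_def Fm_def)

lemma step_germ: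
  assumes k: "k \<in> Obj I" and r: "r < n"
  shows "germ_eq G (A k (Suc r), Fm k (Suc r)) (A k (Suc r mod n), Fm k (Suc r mod n))"
proof (cases "Suc r < n")
  case True then show ?thesis using germ_refl[OF G A_obj[OF k]] by simp
next
  case False
  then have e: "Suc r = n" using r by simp
  have "germ_eq G (pro_pow \<phi> n k) (pro_id k)" using pown k unfolding pro_eq_def by blast
  then show ?thesis using e by (simp add: A_def Fm_def pro_id_def pro_pow_0)
qed

lemma cone_exists:
  assumes j: "j \<in> J" shows "\<exists>c \<beta>. cone_ok j c \<beta>"
proof -
  let ?F = "fst j" and ?M = "snd j"
  have fin: "finite ?F" "finite ?M" and FO: "?F \<subseteq> Obj I" using j by (auto simp: J_iff)
  let ?S0 = "(\<lambda>(k,r). A k r) ` (?F \<times> {..<n})"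
  have "finite ?S0" "?S0 \<subseteq> Obj I" using fin FO A_obj by auto
  from finite_ub[OF G this] obtain c0 where c0: "c0 \<in> Obj I"
    "\<And>k r. k \<in> ?F \<Longrightarrow> r < n \<Longrightarrow> cat_hom I (A k r) c0 \<noteq> {}" by fastforce
  define \<alpha> where "\<alpha> k r = (SOME u. u \<in> cat_hom I (A k r) c0)" for k r
  have \<alpha>: "\<And>k r. k \<in> ?F \<Longrightarrow> r < n \<Longrightarrow> \<alpha> k r \<in> cat_hom I (A k r) c0"
    unfolding \<alpha>_def using c0(2) by (metis ex_in_conv someI_ex)
  define S1 where "S1 = ?M \<times> {..<n}"
  define S2 where "S2 = {(k,r). k \<in> ?F \<and> fst (\<phi> k) \<in> ?F \<and> r < n}"
  define FF where "FF s = (case s of Inl (v,r) \<Rightarrow> (\<lambda>x. pmap G v (Fm (Cod I v) r (pmap G (\<alpha> (Cod I v) r) x)))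
                 | Inr (k,r) \<Rightarrow> (\<lambda>x. snd (\<phi> k) (Fm (fst (\<phi> k)) r (pmap G (\<alpha> (fst (\<phi> k)) r) x))))" for s
  define GG where "GG s = (case s of Inl (v,r) \<Rightarrow> (\<lambda>x. Fm (Dom I v) r (pmap G (\<alpha> (Dom I v) r) x))
                 | Inr (k,r) \<Rightarrow> (\<lambda>x. Fm k (Suc r mod n) (pmap G (\<alpha> k (Suc r mod n)) x)))" for s
  have finS: "finite (Inl ` S1 \<union> Inr ` S2)"
  proof -
    have "S2 \<subseteq> ?F \<times> {..<n}" by (auto simp: S2_def)
    then have "finite S2" using fin finite_subset by blast
    then show ?thesis using fin by (simp add: S1_def)
  qed
  have gs: "germ_eq G (c0, FF s) (c0, GG s)" if s: "s \<in> Inl ` S1 \<union> Inr ` S2" for s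
  proof -
    from s show ?thesis
    proof
      assume "s \<in> Inl ` S1"
      then obtain v r where sv: "s = Inl (v,r)" "v \<in> ?M" "r < n" by (auto simp: S1_def)
      note vv = J_arr[OF j sv(2)]
      show ?thesis unfolding sv FF_def GG_def
        using germ_two[OF G powD2[OF conjunct1[OF vv], of r] \<alpha>[of "Cod I v" r] \<alpha>[of "Dom I v" r]] vv sv
        by simp
    next
      assume "s \<in> Inr ` S2"
      then obtain k r where sk: "s = Inr (k,r)" "k \<in> ?F" "fst (\<phi> k) \<in> ?F" "r < n" by (auto simp: S2_def)
      have k: "k \<in> Obj I" using FO sk by auto
      have g: "germ_eq G (A (fst (\<phi> k)) r, \<lambda>x. snd (\<phi> k) (Fm (fst (\<phi> k)) r x))
                         (A k (Suc r mod n), Fm k (Suc r mod n))"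
        using step_germ[OF k sk(4)] by (simp add: ASuc FmSuc comp_def)
      have r': "Suc r mod n < n" using n by simp
      show ?thesis unfolding sk FF_def GG_def
        using germ_two[OF G g \<alpha>[of "fst (\<phi> k)" r] \<alpha>[of k "Suc r mod n"]] sk r'
        by (simp add: ASuc)
    qed
  qed
  from germ_multi[OF G finS c0(1), where F=FF and G=GG, OF gs] obtain c w where w: "w \<in> cat_hom I c0 c"
    "\<forall>s\<in>Inl ` S1 \<union> Inr ` S2. \<forall>x\<in>carrier (Gr c). FF s (pmap G w x) = GG s (pmap G w x)" by blast
  define \<beta> where "\<beta> k r = Comp I w (\<alpha> k r)" for k r
  have \<beta>: "\<And>k r. k \<in> ?F \<Longrightarrow> r < n \<Longrightarrow> \<beta> k r \<in> cat_hom I (A k r) c"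
    unfolding \<beta>_def using comp_hom[OF C \<alpha> w(1)] by blast
  have c: "c \<in> Obj I" using hom_objs[OF C w(1)] by auto
  have pb: "\<And>k r x. k \<in> ?F \<Longrightarrow> r < n \<Longrightarrow> x \<in> carrier (Gr c) \<Longrightarrow>
      pmap G (\<beta> k r) x = pmap G (\<alpha> k r) (pmap G w x)"
    unfolding \<beta>_def using pmap_comp[OF G \<alpha> w(1)] by blast
  have "cone_ok j c \<beta>"
    unfolding cone_ok_def
  proof (intro conjI ballI allI impI c \<beta>)
    fix x assume x: "x \<in> carrier (Gr c)"
    show "inL j (famF ?F \<beta> x)"
    proof (rule inLI)
      fix k r assume kr: "k \<in> ?F" "r < n"
      show "famF ?F \<beta> x k r \<in> carrier (Gr k)"
        using kr hom_in_carrier[OF Fm_hom pmap_carrier[OF G \<beta> x]] FO by (auto simp: famF_def)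
    next
      fix k r assume "\<not> (k \<in> ?F \<and> r < n)" then show "famF ?F \<beta> x k r = undefined"
        unfolding famF_def by auto
    next
      fix v r assume v: "v \<in> ?M" "r < n"
      note vv = J_arr[OF j v(1)]
      have "(Inl (v,r)) \<in> Inl ` S1 \<union> Inr ` S2" using v by (simp add: S1_def)
      then have "FF (Inl (v,r)) (pmap G w x) = GG (Inl (v,r)) (pmap G w x)" using w(2) x by blast
      then show "pmap G v (famF ?F \<beta> x (Cod I v) r) = famF ?F \<beta> x (Dom I v) r"
        using vv v x pb by (simp add: famF_def FF_def GG_def)
    next
      fix k r assume kr: "k \<in> ?F" "fst (\<phi> k) \<in> ?F" "r < n"
      have "(Inr (k,r)) \<in> Inl ` S1 \<union> Inr ` S2" using kr by (simp add: S2_def)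
      then have "FF (Inr (k,r)) (pmap G w x) = GG (Inr (k,r)) (pmap G w x)" using w(2) x by blast
      moreover have "Suc r mod n < n" using n by simp
      ultimately show "snd (\<phi> k) (famF ?F \<beta> x (fst (\<phi> k)) r) = famF ?F \<beta> x k (Suc r mod n)"
        using kr x pb by (simp add: famF_def FF_def GG_def)
    qed
  qed
  then show ?thesis by blast
qed

definition cc where "cc j = (SOME p. cone_ok j (fst p) (snd p))"

lemma cc: "j \<in> J \<Longrightarrow> cone_ok j (fst (cc j)) (snd (cc j))"
  unfolding cc_def using cone_exists someI_ex[of "\<lambda>p. cone_ok j (fst p) (snd p)"] by auto

definition \<theta> where "\<theta> j = (fst (cc j), \<lambda>x. {famF (fst j) (snd (cc j)) x})"

end



context psys begin

lemma fam_germ: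
  assumes c1: "c1 \<in> Obj I" and c2: "c2 \<in> Obj I" and F: "finite F"
    and g: "\<And>k r. k \<in> F \<Longrightarrow> r < n \<Longrightarrow> germ_eq G (c1, h1 k r) (c2, h2 k r)"
  shows "germ_eq G (c1, \<lambda>x. {\<lambda>k r. if k \<in> F \<and> r < n then h1 k r x else undefined})
                   (c2, \<lambda>x. {\<lambda>k r. if k \<in> F \<and> r < n then h2 k r x else undefined})"
proof -
  have S: "finite (F \<times> {..<n})" using F by simp
  have gs: "\<And>s. s \<in> F \<times> {..<n} \<Longrightarrow> germ_eq G (c1, case_prod h1 s) (c2, case_prod h2 s)"
    using g by auto
  obtain d u u' where d: "u \<in> cat_hom I c1 d" "u' \<in> cat_hom I c2 d"
    "\<forall>x\<in>carrier (Gr d). \<forall>s\<in>F \<times> {..<n}. case_prod h1 s (pmap G u x) = case_prod h2 s (pmap G u' x)"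
    using germ_prod[where ga="case_prod h1" and gb="case_prod h2", OF G S c1 c2 gs] by blast
  show ?thesis
  proof (rule germ_eqI[OF d(1,2)])
    fix x assume "x \<in> carrier (Gr d)"
    then show "{\<lambda>k r. if k \<in> F \<and> r < n then h1 k r (pmap G u x) else undefined} =
               {\<lambda>k r. if k \<in> F \<and> r < n then h2 k r (pmap G u' x) else undefined}"
      using d(3) by (auto intro!: ext)
  qed
qed

lemma cone_c: "j \<in> J \<Longrightarrow> fst (cc j) \<in> Obj I" using cc by (simp add: cone_ok_def)
lemma cone_b: "j \<in> J \<Longrightarrow> k \<in> fst j \<Longrightarrow> r < n \<Longrightarrow> snd (cc j) k r \<in> cat_hom I (A k r) (fst (cc j))"
  using cc by (simp add: cone_ok_def)
lemma cone_L: "j \<in> J \<Longrightarrow> x \<in> carrier (Gr (fst (cc j))) \<Longrightarrow> inL j (famF (fst j) (snd (cc j)) x)"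
  using cc by (simp add: cone_ok_def)

lemma theta_hom:
  assumes j: "j \<in> J"
  shows "snd (\<theta> j) \<in> hom (Gr (fst (\<theta> j))) (Hg j)"
  unfolding hom_def
proof (intro CollectI conjI ballI Pi_I)
  fix x assume "x \<in> carrier (Gr (fst (\<theta> j)))"
  then show "snd (\<theta> j) x \<in> carrier (Hg j)"
    using cone_L[OF j] by (auto simp: \<theta>_def Hg_carrier)
next
  fix x y assume x: "x \<in> carrier (Gr (fst (\<theta> j)))" and y: "y \<in> carrier (Gr (fst (\<theta> j)))"
  have "famF (fst j) (snd (cc j)) (x \<otimes>\<^bsub>Gr (fst (cc j))\<^esub> y) =
        mulF (fst j) (famF (fst j) (snd (cc j)) x) (famF (fst j) (snd (cc j)) y)"
  proof (intro ext)
    fix k r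
    show "famF (fst j) (snd (cc j)) (x \<otimes>\<^bsub>Gr (fst (cc j))\<^esub> y) k r =
        mulF (fst j) (famF (fst j) (snd (cc j)) x) (famF (fst j) (snd (cc j)) y) k r"
    proof (cases "k \<in> fst j \<and> r < n")
      case True
      then have b: "snd (cc j) k r \<in> cat_hom I (A k r) (fst (cc j))" using cone_b[OF j] by auto
      have k: "k \<in> Obj I" using True j by (auto simp: J_iff)
      have xy: "x \<in> carrier (Gr (fst (cc j)))" "y \<in> carrier (Gr (fst (cc j)))" using x y by (auto simp: \<theta>_def)
      show ?thesis using True
        by (simp add: famF_def mulF_def hom_mult[OF pmap_hom[OF G b] xy] hom_mult[OF Fm_hom[OF k] pmap_carrier[OF G b xy(1)] pmap_carrier[OF G b xy(2)]])
    qed (auto simp: famF_def mulF_def)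
  qed
  then show "snd (\<theta> j) (x \<otimes>\<^bsub>Gr (fst (\<theta> j))\<^esub> y) = snd (\<theta> j) x \<otimes>\<^bsub>Hg j\<^esub> snd (\<theta> j) y"
    by (simp add: \<theta>_def Hg_mult)
qed

lemma J_fin: "j \<in> J \<Longrightarrow> finite (fst j)" by (simp add: J_iff)

lemma theta_mor: "pro_mor G H \<theta>"
proof (rule pro_morI)
  show "category (pidx H)" using pg_cat[OF H_group] .
next
  fix j assume "j \<in> Obj (pidx H)"
  then have j: "j \<in> J" by (simp add: dircat_def)
  show "fst (\<theta> j) \<in> Obj I \<and> snd (\<theta> j) \<in> hom (Gr (fst (\<theta> j))) (pgrp H j)"
    using theta_hom[OF j] cone_c[OF j] by (simp add: \<theta>_def)
next
  fix v d e assume "v \<in> cat_hom (pidx H) d e"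
  then have v: "v = (d,e)" "d \<in> J" "e \<in> J" "leq d e" by (simp_all add: dircat_hom)
  have eq: "(\<lambda>x. pmap H v (snd (\<theta> e) x)) =
     (\<lambda>x. {\<lambda>k r. if k \<in> fst d \<and> r < n then Fm k r (pmap G (snd (cc e) k r) x) else undefined})"
    using v(4) by (auto intro!: ext simp: v(1) \<theta>_def rmap_def restrF_def famF_def leq_def)
  have eq2: "snd (\<theta> d) =
     (\<lambda>x. {\<lambda>k r. if k \<in> fst d \<and> r < n then Fm k r (pmap G (snd (cc d) k r) x) else undefined})"
    by (auto intro!: ext simp: \<theta>_def famF_def)
  have "germ_eq G (fst (cc e), \<lambda>x. {\<lambda>k r. if k \<in> fst d \<and> r < n then Fm k r (pmap G (snd (cc e) k r) x) else undefined})
                  (fst (cc d), \<lambda>x. {\<lambda>k r. if k \<in> fst d \<and> r < n then Fm k r (pmap G (snd (cc d) k r) x) else undefined})"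
  proof (rule fam_germ[OF cone_c[OF v(3)] cone_c[OF v(2)] J_fin[OF v(2)]])
    fix k r assume kr: "k \<in> fst d" "r < n"
    then have ke: "k \<in> fst e" using v(4) by (auto simp: leq_def)
    show "germ_eq G (fst (cc e), \<lambda>x. Fm k r (pmap G (snd (cc e) k r) x))
                    (fst (cc d), \<lambda>x. Fm k r (pmap G (snd (cc d) k r) x))"
      by (rule germ_trans[OF G germ_real[OF G cone_b[OF v(3) ke kr(2)]] germ_sym[OF germ_real[OF G cone_b[OF v(2) kr]]]])
  qed
  then show "germ_eq G (fst (\<theta> e), \<lambda>x. pmap H v (snd (\<theta> e) x)) (fst (\<theta> d), snd (\<theta> d))"
    unfolding eq eq2 by (simp add: \<theta>_def)
qed

definition \<eta> :: "'i \<Rightarrow> ('i set \<times> 'm set) \<times> (('i \<Rightarrow> nat \<Rightarrow> 'a) set \<Rightarrow> 'a)" where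
  "\<eta> i = (({i},{}), \<lambda>P. the_elem P i 0)"

lemma single_J: "i \<in> Obj I \<Longrightarrow> ({i},{}) \<in> J" by (simp add: J_def)

lemma eta_mor: "pro_mor H G \<eta>"
proof (rule pro_morI[OF C])
  fix i assume i: "i \<in> Obj I"
  have "(\<lambda>P. the_elem P i 0) \<in> hom (Hg ({i},{})) (Gr i)"
    unfolding hom_def
  proof (intro CollectI conjI ballI Pi_I)
    fix P assume "P \<in> carrier (Hg ({i},{}))"
    then obtain x where "P = {x}" "inL ({i},{}) x" by (auto simp: Hg_carrier)
    then show "the_elem P i 0 \<in> carrier (Gr i)" using inLD(1)[of "({i},{})" x i 0] n by simp
  next
    fix P Q assume "P \<in> carrier (Hg ({i},{}))" "Q \<in> carrier (Hg ({i},{}))"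
    then obtain x y where "P = {x}" "Q = {y}" by (auto simp: Hg_carrier)
    then show "the_elem (P \<otimes>\<^bsub>Hg ({i}, {})\<^esub> Q) i 0 = the_elem P i 0 \<otimes>\<^bsub>Gr i\<^esub> the_elem Q i 0"
      using n by (simp add: Hg_mult mulF_def)
  qed
  then show "fst (\<eta> i) \<in> Obj (pidx H) \<and> snd (\<eta> i) \<in> hom (pgrp H (fst (\<eta> i))) (Gr i)"
    using single_J[OF i] by (simp add: \<eta>_def dircat_def)
next
  fix v d e assume v: "v \<in> cat_hom I d e"
  have d: "d \<in> Obj I" and e: "e \<in> Obj I" and va: "v \<in> Arr I" using hom_objs[OF C v] by auto
  let ?k = "({d,e},{v})"
  have k: "?k \<in> J" using d e va v by (simp add: J_def cat_hom_def)
  have a1: "(({e},{}), ?k) \<in> cat_hom (pidx H) ({e},{}) ?k"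
    using k single_J[OF e] by (simp add: dircat_hom leq_def)
  have a2: "(({d},{}), ?k) \<in> cat_hom (pidx H) ({d},{}) ?k"
    using k single_J[OF d] by (simp add: dircat_hom leq_def)
  show "germ_eq H (fst (\<eta> e), \<lambda>x. pmap G v (snd (\<eta> e) x)) (fst (\<eta> d), snd (\<eta> d))"
    unfolding \<eta>_def fst_conv snd_conv
  proof (rule germ_eqI[OF a1 a2])
    fix P assume "P \<in> carrier (pgrp H ?k)"
    then obtain x where P: "P = {x}" "inL ?k x" by (auto simp: Hg_carrier)
    have "pmap G v (x e 0) = x d 0" using inLD(3)[OF P(2), of v 0] n v by (simp add: cat_hom_def)
    then show "pmap G v (the_elem (pmap H (({e}, {}), ?k) P) e 0) = the_elem (pmap H (({d}, {}), ?k) P) d 0"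
      using n by (simp add: P rmap_def restrF_def)
  qed
qed

lemma comp1: "pro_eq G G (pro_comp \<eta> \<theta>) pro_id"
  unfolding pro_eq_def
proof
  fix i assume i: "i \<in> Obj I"
  note j = single_J[OF i]
  have b: "snd (cc ({i},{})) i 0 \<in> cat_hom I i (fst (cc ({i},{})))"
    using cone_b[OF j, of i 0] n by (simp add: A0)
  have "germ_eq G (fst (cc ({i},{})), \<lambda>x. id (pmap G (snd (cc ({i},{})) i 0) x)) (i, id)"
    by (rule germ_real[OF G b])
  then show "germ_eq G (pro_comp \<eta> \<theta> i) (pro_id i)"
    using n by (simp add: pro_comp_def \<eta>_def \<theta>_def famF_def pro_id_def Fm0 comp_def)
qed

lemma chain:
  assumes x: "inL j x" and r: "r < n" and sub: "A k ` {..r} \<subseteq> fst j"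
  shows "x k r = Fm k r (x (A k r) 0)"
  using r sub
proof (induction r arbitrary: k)
  case 0 then show ?case by (simp add: A0 Fm0)
next
  case (Suc r)
  have sub': "A (fst (\<phi> k)) ` {..r} \<subseteq> fst j"
  proof
    fix y assume "y \<in> A (fst (\<phi> k)) ` {..r}"
    then obtain t where "t \<le> r" "y = A (fst (\<phi> k)) t" by auto
    then have "y = A k (Suc t)" "Suc t \<le> Suc r" by (simp_all add: ASuc)
    then show "y \<in> fst j" using Suc.prems(2) by auto
  qed
  have k: "k \<in> fst j" using Suc.prems(2) A0[of k] by force
  have pk: "fst (\<phi> k) \<in> fst j" using sub' A0[of "fst (\<phi> k)"] by force
  have "snd (\<phi> k) (x (fst (\<phi> k)) r) = x k (Suc r mod n)"
    using inLD(4)[OF x k pk] Suc.prems(1) by simp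
  then have "x k (Suc r) = snd (\<phi> k) (x (fst (\<phi> k)) r)" using Suc.prems(1) by simp
  also have "\<dots> = snd (\<phi> k) (Fm (fst (\<phi> k)) r (x (A (fst (\<phi> k)) r) 0))"
    using Suc.IH[OF _ sub'] Suc.prems(1) by simp
  finally show ?case by (simp add: ASuc FmSuc)
qed

lemma comp2: "pro_eq H H (pro_comp \<theta> \<eta>) pro_id"
  unfolding pro_eq_def
proof
  fix j assume "j \<in> Obj (pidx H)"
  then have j: "j \<in> J" by (simp add: dircat_def)
  define c where "c = fst (cc j)"
  define \<beta> where "\<beta> = snd (cc j)"
  have c: "c \<in> Obj I" using cone_c[OF j] by (simp add: c_def)
  have \<beta>: "\<And>k r. k \<in> fst j \<Longrightarrow> r < n \<Longrightarrow> \<beta> k r \<in> cat_hom I (A k r) c"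
    using cone_b[OF j] by (simp add: c_def \<beta>_def)
  have FO: "fst j \<subseteq> Obj I" "finite (fst j)" "finite (snd j)" using j by (auto simp: J_iff)
  define F' where "F' = fst j \<union> {c} \<union> (\<Union>k\<in>fst j. A k ` {..n})"
  define M' where "M' = snd j \<union> (\<lambda>(k,r). \<beta> k r) ` (fst j \<times> {..<n})"
  let ?k = "(F', M')"
  have k: "?k \<in> J"
    unfolding J_iff fst_conv snd_conv
  proof (intro conjI)
    show "finite F'" using FO by (simp add: F'_def)
    show "finite M'" using FO by (simp add: M'_def)
    show "F' \<subseteq> Obj I" using FO c A_obj by (auto simp: F'_def)
    show "M' \<subseteq> Arr I" using j \<beta> by (auto simp: M'_def J_iff cat_hom_def)
    show "\<forall>v\<in>M'. Dom I v \<in> F' \<and> Cod I v \<in> F'"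
    proof
    fix v assume "v \<in> M'"
    then show "Dom I v \<in> F' \<and> Cod I v \<in> F'"
    proof (unfold M'_def, elim UnE)
      assume "v \<in> snd j" then show ?thesis using j by (auto simp: J_iff F'_def)
    next
      assume "v \<in> (\<lambda>(k,r). \<beta> k r) ` (fst j \<times> {..<n})"
      then obtain k r where kr: "k \<in> fst j" "r < n" "v = \<beta> k r" by auto
      have "A k r \<in> F'" unfolding F'_def using kr(1) kr(2) by (intro UnI2 UN_I[of k]) auto
      moreover have "c \<in> F'" by (simp add: F'_def)
      ultimately show ?thesis using \<beta>[OF kr(1,2)] kr(3) by (auto simp: cat_hom_def)
    qed
    qed
  qed
  have a1: "(({c},{}), ?k) \<in> cat_hom (pidx H) ({c},{}) ?k"
    using k single_J[OF c] by (simp add: dircat_hom leq_def F'_def)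
  have a2: "(j, ?k) \<in> cat_hom (pidx H) j ?k"
    using k j by (auto simp: dircat_hom leq_def F'_def M'_def)
  have "germ_eq H (({c},{}), \<lambda>P. {famF (fst j) \<beta> (the_elem P c 0)}) (j, id)"
  proof (rule germ_eqI[OF a1 a2])
    fix P assume "P \<in> carrier (pgrp H ?k)"
    then obtain x where P: "P = {x}" and x: "inL ?k x" by (auto simp: Hg_carrier)
    have "famF (fst j) \<beta> (x c 0) = restrF (fst j) x"
    proof (intro ext)
      fix k r show "famF (fst j) \<beta> (x c 0) k r = restrF (fst j) x k r"
      proof (cases "k \<in> fst j \<and> r < n")
        case True
        have vM: "\<beta> k r \<in> M'" using True by (auto simp: M'_def)
        have "pmap G (\<beta> k r) (x c 0) = x (A k r) 0"
          using inLD(3)[OF x, of "\<beta> k r" 0] vM \<beta>[of k r] True n by (simp add: cat_hom_def)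
        moreover have "x k r = Fm k r (x (A k r) 0)"
          by (rule chain[OF x]) (use True in \<open>auto simp: F'_def\<close>)
        ultimately show ?thesis using True by (simp add: famF_def restrF_def)
      qed (auto simp: famF_def restrF_def)
    qed
    then show "{famF (fst j) \<beta> (the_elem (pmap H (({c}, {}), ?k) P) c 0)} = id (pmap H (j, ?k) P)"
      using n by (simp add: P rmap_def restrF_def)
  qed
  then show "germ_eq H (pro_comp \<theta> \<eta> j) (pro_id j)"
    unfolding c_def \<beta>_def by (simp add: pro_comp_def \<theta>_def \<eta>_def pro_id_def comp_def)
qed

lemma commute: "pro_eq G H (pro_comp \<theta> \<phi>) (pro_comp (\<lambda>j. (j, psi j)) \<theta>)"
  unfolding pro_eq_def
proof
  fix j assume "j \<in> Obj (pidx H)"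
  then have j: "j \<in> J" by (simp add: dircat_def)
  define c where "c = fst (cc j)"
  define \<beta> where "\<beta> = snd (cc j)"
  have c: "c \<in> Obj I" using cone_c[OF j] by (simp add: c_def)
  have \<beta>: "\<And>k r. k \<in> fst j \<Longrightarrow> r < n \<Longrightarrow> \<beta> k r \<in> cat_hom I (A k r) c"
    using cone_b[OF j] by (simp add: c_def \<beta>_def)
  have eq1: "pro_comp \<theta> \<phi> j = (fst (\<phi> c), \<lambda>y. {\<lambda>k r. if k \<in> fst j \<and> r < n then
       Fm k r (pmap G (\<beta> k r) (snd (\<phi> c) y)) else undefined})"
    unfolding c_def \<beta>_def by (simp add: pro_comp_def \<theta>_def famF_def comp_def)
  have eq2: "pro_comp (\<lambda>j. (j, psi j)) \<theta> j = (c, \<lambda>z. {\<lambda>k r. if k \<in> fst j \<and> r < n then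
       Fm k (Suc r mod n) (pmap G (\<beta> k (Suc r mod n)) z) else undefined})"
    unfolding c_def \<beta>_def using n by (auto intro!: ext simp: pro_comp_def \<theta>_def famF_def psi_def psiF_def comp_def)
  have "germ_eq G (fst (\<phi> c), \<lambda>y. {\<lambda>k r. if k \<in> fst j \<and> r < n then
       Fm k r (pmap G (\<beta> k r) (snd (\<phi> c) y)) else undefined})
     (c, \<lambda>z. {\<lambda>k r. if k \<in> fst j \<and> r < n then
       Fm k (Suc r mod n) (pmap G (\<beta> k (Suc r mod n)) z) else undefined})"
  proof (rule fam_germ[OF phi_obj[OF c] c J_fin[OF j]])
    fix k r assume kr: "k \<in> fst j" "r < n"
    have k: "k \<in> Obj I" using kr j by (auto simp: J_iff)
    have r': "Suc r mod n < n" using n by simp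
    have g1: "germ_eq G (fst (\<phi> c), \<lambda>y. Fm k r (pmap G (\<beta> k r) (snd (\<phi> c) y)))
                   (fst (\<phi> (A k r)), \<lambda>y. Fm k r (snd (\<phi> (A k r)) y))"
      using germ_post[OF pro_morD2[OF phi \<beta>[OF kr]], of "Fm k r"] .
    have e: "(fst (\<phi> (A k r)), \<lambda>y. Fm k r (snd (\<phi> (A k r)) y)) = (A k (Suc r), Fm k (Suc r))"
      by (simp add: A_def Fm_def pro_pow_Suc' pro_comp_def comp_def)
    have g2: "germ_eq G (A k (Suc r mod n), Fm k (Suc r mod n))
                  (c, \<lambda>z. Fm k (Suc r mod n) (pmap G (\<beta> k (Suc r mod n)) z))"
      using germ_sym[OF germ_real[OF G \<beta>[OF kr(1) r']]] .
    show "germ_eq G (fst (\<phi> c), \<lambda>y. Fm k r (pmap G (\<beta> k r) (snd (\<phi> c) y)))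
                    (c, \<lambda>z. Fm k (Suc r mod n) (pmap G (\<beta> k (Suc r mod n)) z))"
      using germ_trans[OF G g1 germ_trans[OF G _ g2]] step_germ[OF k kr(2)] e by simp
  qed
  then show "germ_eq G (pro_comp \<theta> \<phi> j) (pro_comp (\<lambda>j. (j, psi j)) \<theta> j)"
    unfolding eq1 eq2 .
qed

lemma result:
  "\<exists>(J :: ('i set \<times> 'm set) set) leq
           (G' :: ('i set \<times> 'm set, ('i set \<times> 'm set) \<times> ('i set \<times> 'm set), ('i \<Rightarrow> nat \<Rightarrow> 'a) set) pro_obj)
           \<psi> \<theta>.
     directed_set J leq \<and> pidx G' = dircat J leq \<and> pro_group G' \<and>
     (\<forall>j\<in>J. \<psi> j \<in> iso (pgrp G' j) (pgrp G' j) \<and>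
             (\<forall>x\<in>carrier (pgrp G' j). (\<psi> j ^^ n) x = x)) \<and>
     (\<forall>a\<in>J. \<forall>b\<in>J. leq a b \<longrightarrow>
        (\<forall>x\<in>carrier (pgrp G' b). pmap G' (a,b) (\<psi> b x) = \<psi> a (pmap G' (a,b) x))) \<and>
     pro_iso G G' \<theta> \<and>
     pro_eq G G' (pro_comp \<theta> \<phi>) (pro_comp (\<lambda>j. (j, \<psi> j)) \<theta>)"
proof (intro exI conjI)
  show "directed_set J leq" by (rule directed)
  show "pidx H = dircat J leq" by simp
  show "pro_group H" by (rule H_group)
  show "\<forall>j\<in>J. psi j \<in> iso (pgrp H j) (pgrp H j) \<and> (\<forall>x\<in>carrier (pgrp H j). (psi j ^^ n) x = x)"
    using psi_iso psi_powc by simp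
  show "\<forall>a\<in>J. \<forall>b\<in>J. leq a b \<longrightarrow> (\<forall>x\<in>carrier (pgrp H b). pmap H (a,b) (psi b x) = psi a (pmap H (a,b) x))"
    using psi_restr by simp
  show "pro_iso G H \<theta>" unfolding pro_iso_def using theta_mor eta_mor comp1 comp2 by blast
  show "pro_eq G H (pro_comp \<theta> \<phi>) (pro_comp (\<lambda>j. (j, psi j)) \<theta>)" by (rule commute)
qed

end


theorem mainTheorem7:
  fixes G :: "('i,'m,'a) pro_obj" and \<phi> :: "'i \<Rightarrow> 'i \<times> ('a \<Rightarrow> 'a)" and n :: nat
  assumes "pro_group G"
    and "pro_iso G G \<phi>"
    and "n \<ge> 1"
    and "pro_eq G G (pro_pow \<phi> n) pro_id"
  shows "\<exists>(J :: ('i set \<times> 'm set) set) leq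
           (G' :: ('i set \<times> 'm set, ('i set \<times> 'm set) \<times> ('i set \<times> 'm set), ('i \<Rightarrow> nat \<Rightarrow> 'a) set) pro_obj)
           \<psi> \<theta>.
     directed_set J leq \<and> pidx G' = dircat J leq \<and> pro_group G' \<and>
     (\<forall>j\<in>J. \<psi> j \<in> iso (pgrp G' j) (pgrp G' j) \<and>
             (\<forall>x\<in>carrier (pgrp G' j). (\<psi> j ^^ n) x = x)) \<and>
     (\<forall>a\<in>J. \<forall>b\<in>J. leq a b \<longrightarrow>
        (\<forall>x\<in>carrier (pgrp G' b). pmap G' (a,b) (\<psi> b x) = \<psi> a (pmap G' (a,b) x))) \<and>
     pro_iso G G' \<theta> \<and>
     pro_eq G G' (pro_comp \<theta> \<phi>) (pro_comp (\<lambda>j. (j, \<psi> j)) \<theta>)"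
proof -
  have phi: "pro_mor G G \<phi>" using assms(2) by (simp add: pro_iso_def)
  interpret psys G \<phi> n using assms(1) phi assms(3) assms(4) by unfold_locales
  show ?thesis by (rule result)
qed

end
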